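(* Let $g\in\mathcal M_K$ be given by $g=\beta Q|_{\mathfrak p}+\alpha_1Q|_{\mathfrak k_1}+\cdots+\alpha_{r+s}Q|_{\mathfrak k_{r+s}}$ with $\beta,\alpha_1,\dots,\alpha_{r+s}>0$. Then the scalar curvature of $g$ is $$S(g)=-\frac14\sum_{i=1}^{r+s}\frac{\alpha_i}{\beta^2}d_i(1-\kappa_i)-\frac{n}{2\beta}+\frac14\sum_{i=1}^{r}\frac{d_i\kappa_i}{\alpha_i}.$$
   Context: Let $G$ be a connected non-compact simple Lie group with Lie algebra $\mathfrak g$, $K$ a maximal compact subgroup with Lie algebra $\mathfrak k$, $B$ the Killing form of $\mathfrak g$, and $\mathfrak p$ the $B$-orthogonal complement of $\mathfrak k$ in $\mathfrak g$. Let $Q=B|_{\mathfrak p}-B|_{\mathfrak k}$. Write $\mathfrak k=\mathfrak k_1\oplus\cdots\oplus\mathfrak k_{r+s}$, where $\mathfrak k_1,\dots,\mathfrak k_r$ are the simple ideals of $[\mathfrak k,\mathfrak k]$, $\mathfrak k_{r+1}$ is the centre of $\mathfrak k$, and $s=1$ if the centre is nontrivial, $s=0$ otherwise. Let $n=\dim\mathfrak p$, $d_i=\dim\mathfrak k_i$, and define $\kappa_i$ by $B_i=\kappa_iB|_{\mathfrak k_i}$, $B_i$ the Killing form of $\mathfrak k_i$. Left-invariant tensor fields on $G$ are identified with bilinear forms on $\mathfrak g$; $Q|_{\mathfrak u}$ denotes $Q$ restricted to $\mathfrak u$ and extended by zero on its $Q$-orthogonal complement. $\mathcal M_K$ is the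 set of left-invariant metrics on $G$ naturally reductive with respect to $G\times K$ (acting by $(x,k)y=xyk^{-1}$), which by a theorem of Gordon are exactly the metrics $\beta Q|_{\mathfrak p}+\sum_i\alpha_iQ|_{\mathfrak k_i}$ with all coefficients positive. $S$ denotes scalar curvature. *)

theory Defs
  imports "HOL-Analysis.Analysis"
begin

text \<open>A real Lie algebra is modelled on a finite-dimensional real vector space
  (type of class euclidean_space; its inner product plays no role) with a bracket br.\<close>

definition lie_bracket :: "('a::euclidean_space \<Rightarrow> 'a \<Rightarrow> 'a) \<Rightarrow> bool" where
  "lie_bracket br \<longleftrightarrow> bilinear br \<and> (\<forall>x y. br x y = - br y x)
     \<and> (\<forall>x y z. br x (br y z) + br y (br z x) + br z (br x y) = 0)"

definition trace_lin :: "('a::euclidean_space \<Rightarrow> 'a) \<Rightarrow> real" where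
  "trace_lin f = (\<Sum>b\<in>Basis. inner (f b) b)"

definition trace_on :: "'a::euclidean_space set \<Rightarrow> ('a \<Rightarrow> 'a) \<Rightarrow> real" where
  "trace_on V f = (SOME t. \<exists>E. finite E \<and> independent E \<and> span E = V \<and>
       t = (\<Sum>e\<in>E. representation E (f e) e))"

definition killing :: "('a::euclidean_space \<Rightarrow> 'a \<Rightarrow> 'a) \<Rightarrow> 'a \<Rightarrow> 'a \<Rightarrow> real" where
  "killing br x y = trace_lin (\<lambda>z. br x (br y z))"

definition killing_on :: "('a::euclidean_space \<Rightarrow> 'a \<Rightarrow> 'a) \<Rightarrow> 'a set \<Rightarrow> 'a \<Rightarrow> 'a \<Rightarrow> real" where
  "killing_on br V x y = trace_on V (\<lambda>z. br x (br y z))"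

definition ideal_of :: "('a::euclidean_space \<Rightarrow> 'a \<Rightarrow> 'a) \<Rightarrow> 'a set \<Rightarrow> 'a set \<Rightarrow> bool" where
  "ideal_of br A I \<longleftrightarrow> subspace I \<and> I \<subseteq> A \<and> (\<forall>x\<in>A. \<forall>y\<in>I. br x y \<in> I)"

definition simple_sub :: "('a::euclidean_space \<Rightarrow> 'a \<Rightarrow> 'a) \<Rightarrow> 'a set \<Rightarrow> bool" where
  "simple_sub br A \<longleftrightarrow> (\<exists>x\<in>A. \<exists>y\<in>A. br x y \<noteq> 0) \<and>
      (\<forall>I. ideal_of br A I \<longrightarrow> I = {0} \<or> I = A)"

definition derived :: "('a::euclidean_space \<Rightarrow> 'a \<Rightarrow> 'a) \<Rightarrow> 'a set \<Rightarrow> 'a set" where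
  "derived br A = span {br x y | x y. x \<in> A \<and> y \<in> A}"

definition centre :: "('a::euclidean_space \<Rightarrow> 'a \<Rightarrow> 'a) \<Rightarrow> 'a set \<Rightarrow> 'a set" where
  "centre br A = {x \<in> A. \<forall>y\<in>A. br x y = 0}"

definition perp_k :: "('a::euclidean_space \<Rightarrow> 'a \<Rightarrow> 'a) \<Rightarrow> 'a set \<Rightarrow> 'a set" where
  "perp_k br k = {x. \<forall>y\<in>k. killing br x y = 0}"

text \<open>k is the Lie algebra of a maximal compact subgroup, i.e. g = k + p is a Cartan decomposition,
  p the B-orthogonal complement of k.\<close>
definition cartan_k :: "('a::euclidean_space \<Rightarrow> 'a \<Rightarrow> 'a) \<Rightarrow> 'a set \<Rightarrow> bool" where
  "cartan_k br k \<longleftrightarrow> subspace k \<and>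
     (\<forall>x\<in>k. \<forall>y\<in>k. br x y \<in> k) \<and>
     (\<forall>x\<in>k. \<forall>y\<in>perp_k br k. br x y \<in> perp_k br k) \<and>
     (\<forall>x\<in>perp_k br k. \<forall>y\<in>perp_k br k. br x y \<in> k) \<and>
     (\<forall>x\<in>k. x \<noteq> 0 \<longrightarrow> killing br x x < 0) \<and>
     (\<forall>x\<in>perp_k br k. x \<noteq> 0 \<longrightarrow> killing br x x > 0) \<and>
     (\<forall>x. \<exists>u\<in>k. \<exists>v\<in>perp_k br k. x = u + v)"

definition fproj :: "('a::euclidean_space \<Rightarrow> 'a \<Rightarrow> real) \<Rightarrow> 'a set \<Rightarrow> 'a \<Rightarrow> 'a" where
  "fproj F U x = (THE u. u \<in> U \<and> (\<forall>w\<in>U. F (x - u) w = 0))"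

text \<open>Q = B|_p - B|_k.\<close>
definition Qform :: "('a::euclidean_space \<Rightarrow> 'a \<Rightarrow> 'a) \<Rightarrow> 'a set \<Rightarrow> 'a \<Rightarrow> 'a \<Rightarrow> real" where
  "Qform br k x y =
     killing br (x - fproj (killing br) k x) (y - fproj (killing br) k y)
     - killing br (fproj (killing br) k x) (fproj (killing br) k y)"

text \<open>F|_U: F restricted to U and extended by zero on the F-orthogonal complement.\<close>
definition restr_form :: "('a::euclidean_space \<Rightarrow> 'a \<Rightarrow> real) \<Rightarrow> 'a set \<Rightarrow> 'a \<Rightarrow> 'a \<Rightarrow> real" where
  "restr_form F U x y = F (fproj F U x) (fproj F U y)"

text \<open>Scalar curvature of the left-invariant metric with inner product gm on the Lie algebra,
  via the Levi-Civita connection on left-invariant fields (Koszul formula)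
  computed in a gm-orthonormal basis.\<close>
definition orthonormal_basis_for :: "('a::euclidean_space \<Rightarrow> 'a \<Rightarrow> real) \<Rightarrow> 'a set \<Rightarrow> bool" where
  "orthonormal_basis_for gm E \<longleftrightarrow> finite E \<and> card E = DIM('a) \<and>
     (\<forall>a\<in>E. \<forall>b\<in>E. gm a b = (if a = b then 1 else 0))"

definition levi_civita ::
  "('a::euclidean_space \<Rightarrow> 'a \<Rightarrow> real) \<Rightarrow> ('a \<Rightarrow> 'a \<Rightarrow> 'a) \<Rightarrow> 'a set \<Rightarrow> 'a \<Rightarrow> 'a \<Rightarrow> 'a" where
  "levi_civita gm br E X Y =
     (\<Sum>e\<in>E. ((gm (br X Y) e - gm (br Y e) X + gm (br e X) Y) / 2) *\<^sub>R e)"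

definition curvature ::
  "('a::euclidean_space \<Rightarrow> 'a \<Rightarrow> real) \<Rightarrow> ('a \<Rightarrow> 'a \<Rightarrow> 'a) \<Rightarrow> 'a set \<Rightarrow> 'a \<Rightarrow> 'a \<Rightarrow> 'a \<Rightarrow> 'a" where
  "curvature gm br E X Y Z =
     levi_civita gm br E X (levi_civita gm br E Y Z) - levi_civita gm br E Y (levi_civita gm br E X Z)
     - levi_civita gm br E (br X Y) Z"

definition scalar_curvature ::
  "('a::euclidean_space \<Rightarrow> 'a \<Rightarrow> real) \<Rightarrow> ('a \<Rightarrow> 'a \<Rightarrow> 'a) \<Rightarrow> real" where
  "scalar_curvature gm br =
     (let E = (SOME E. orthonormal_basis_for gm E)
      in \<Sum>a\<in>E. \<Sum>b\<in>E. gm (curvature gm br E a b b) a)"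

end

theory Submission
  imports Defs
begin


lemma bil_suml: "bilinear h \<Longrightarrow> h (\<Sum>i\<in>I. f i) y = (\<Sum>i\<in>I. h (f i) y)"
proof -
  assume "bilinear h"
  then interpret l: linear "\<lambda>x. h x y" by (simp add: bilinear_def)
  show ?thesis by (simp add: l.sum)
qed

lemma bil_sumr: "bilinear h \<Longrightarrow> h y (\<Sum>i\<in>I. f i) = (\<Sum>i\<in>I. h y (f i))"
proof -
  assume "bilinear h"
  then interpret l: linear "\<lambda>x. h y x" by (simp add: bilinear_def)
  show ?thesis by (simp add: l.sum)
qed

lemma lin_sum: "linear f \<Longrightarrow> f (\<Sum>i\<in>I. g i) = (\<Sum>i\<in>I. f (g i))"
  by (simp add: linear_sum)

definition onb :: "('a::euclidean_space \<Rightarrow> 'a \<Rightarrow> real) \<Rightarrow> 'a set \<Rightarrow> 'a set \<Rightarrow> bool" where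
  "onb \<phi> V E \<longleftrightarrow> finite E \<and> E \<subseteq> V \<and> (\<forall>a\<in>E. \<forall>b\<in>E. \<phi> a b = (if a = b then 1 else 0))
     \<and> (\<forall>x\<in>V. x = (\<Sum>e\<in>E. \<phi> x e *\<^sub>R e))"

definition orthn :: "('a::euclidean_space \<Rightarrow> 'a \<Rightarrow> real) \<Rightarrow> 'a set \<Rightarrow> bool" where
  "orthn \<phi> E \<longleftrightarrow> (\<forall>a\<in>E. \<forall>b\<in>E. \<phi> a b = (if a = b then 1 else 0))"

lemma orthn_sum_coeff:
  assumes "bilinear \<phi>" "orthn \<phi> E" "finite E" "e0 \<in> E"
  shows "\<phi> (\<Sum>e\<in>E. u e *\<^sub>R e) e0 = u e0"
proof -
  have "\<phi> (\<Sum>e\<in>E. u e *\<^sub>R e) e0 = (\<Sum>e\<in>E. u e * \<phi> e e0)"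
    using assms(1) by (simp add: bil_suml bilinear_lmul)
  also have "\<dots> = (\<Sum>e\<in>E. if e = e0 then u e else 0)"
    using assms(2) unfolding orthn_def by (intro sum.cong) (auto simp: assms(4))
  also have "\<dots> = u e0" using assms(3,4) by simp
  finally show ?thesis .
qed

lemma orthn_independent:
  assumes "bilinear \<phi>" "orthn \<phi> E" "finite E"
  shows "independent E"
proof
  assume "dependent E"
  then obtain u v where "v \<in> E" "u v \<noteq> 0" "(\<Sum>v\<in>E. u v *\<^sub>R v) = 0"
    using dependent_finite[OF assms(3)] by auto
  moreover have "\<phi> (\<Sum>v\<in>E. u v *\<^sub>R v) v = u v"
    using orthn_sum_coeff[OF assms] \<open>v \<in> E\<close> by auto
  ultimately show False using assms(1) by (simp add: bilinear_lzero)
qed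

lemma orthn_span_coeff:
  assumes "bilinear \<phi>" "orthn \<phi> E" "finite E" "x \<in> span E"
  shows "x = (\<Sum>e\<in>E. \<phi> x e *\<^sub>R e)"
proof -
  obtain u where u: "x = (\<Sum>e\<in>E. u e *\<^sub>R e)"
    using assms(4) span_finite[OF assms(3)] by auto
  have "\<phi> x e = u e" if "e \<in> E" for e
    using orthn_sum_coeff[OF assms(1-3) that] u by simp
  then show ?thesis using u by (auto intro: sum.cong)
qed

lemma gram_schmidt_step:
  assumes bil: "bilinear \<phi>" and sym: "\<And>x y. \<phi> x y = \<phi> y x"
    and pos: "\<And>x. x \<in> V \<Longrightarrow> x \<noteq> 0 \<Longrightarrow> \<phi> x x > 0" and V: "subspace V"
    and S: "finite S" "S \<subseteq> V"
  shows "\<exists>E. finite E \<and> E \<subseteq> V \<and> orthn \<phi> E \<and> span E = span S"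
  using S
proof (induction S rule: finite_induct)
  case empty
  then show ?case by (intro exI[of _ "{}"]) (auto simp: orthn_def)
next
  case (insert a S)
  then obtain E where E: "finite E" "E \<subseteq> V" "orthn \<phi> E" "span E = span S" by auto
  define w where "w = a - (\<Sum>e\<in>E. \<phi> a e *\<^sub>R e)"
  have aV: "a \<in> V" using insert by auto
  have sumV: "(\<Sum>e\<in>E. \<phi> a e *\<^sub>R e) \<in> V"
    using E V by (intro subspace_sum) (auto intro: subspace_scale)
  have wV: "w \<in> V" unfolding w_def using aV sumV V by (simp add: subspace_diff)
  have wsp: "w \<in> span (insert a E)"
    unfolding w_def by (intro span_diff span_sum span_scale) (auto intro: span_base)
  have asp: "a = w + (\<Sum>e\<in>E. \<phi> a e *\<^sub>R e)" unfolding w_def by simp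
  have worth: "\<phi> w e = 0" if "e \<in> E" for e
    using orthn_sum_coeff[OF bil E(3) E(1) that, of "\<lambda>e. \<phi> a e"]
    unfolding w_def by (simp add: bilinear_lsub[OF bil])
  show ?case
  proof (cases "w = 0")
    case True
    have "(\<Sum>e\<in>E. \<phi> a e *\<^sub>R e) \<in> span E" by (intro span_sum span_scale span_base)
    then have "a \<in> span E" using asp True by simp
    then have "span (insert a S) = span S"
      using E(4) by (simp add: span_redundant)
    then show ?thesis using E by auto
  next
    case False
    define c where "c = sqrt (\<phi> w w)"
    have cpos: "c > 0" unfolding c_def using pos[OF wV False] by simp
    have cc: "c * c = \<phi> w w" unfolding c_def using pos[OF wV False] by simp
    define w' where "w' = (1 / c) *\<^sub>R w"
    have w'V: "w' \<in> V" unfolding w'_def using wV V by (simp add: subspace_scale)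
    have w'n: "\<phi> w' w' = 1" unfolding w'_def using cpos cc
      by (simp add: bilinear_lmul[OF bil] bilinear_rmul[OF bil]) (metis cc cpos divide_self_if mult_pos_pos order_less_irrefl times_divide_eq_left)
    have w'o: "\<phi> w' e = 0" "\<phi> e w' = 0" if "e \<in> E" for e
      unfolding w'_def using worth[OF that] sym[of e w] by (auto simp: bilinear_lmul[OF bil] bilinear_rmul[OF bil])
    have w'E: "w' \<notin> E" using w'n w'o by force
    have orth: "orthn \<phi> (insert w' E)"
      using E(3) w'n w'o w'E unfolding orthn_def by auto
    have "span (insert w' E) = span (insert a E)"
    proof (subst span_eq, intro conjI)
      show "insert w' E \<subseteq> span (insert a E)"
        using wsp by (auto simp: w'_def intro: span_scale span_base)
      have "w = c *\<^sub>R w'" using cpos by (simp add: w'_def)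
      then have "w \<in> span (insert w' E)" by (auto intro: span_scale span_base)
      then have "a \<in> span (insert w' E)"
        using asp by (metis (no_types, lifting) span_add span_sum span_scale span_base insertCI)
      then show "insert a E \<subseteq> span (insert w' E)" by (auto intro: span_base)
    qed
    also have "\<dots> = span (insert a S)"
      using E(4) by (metis span_insert)
    finally show ?thesis using E w'V orth by (intro exI[of _ "insert w' E"]) auto
  qed
qed

lemma onb_exists:
  assumes bil: "bilinear \<phi>" and sym: "\<And>x y. \<phi> x y = \<phi> y x"
    and pos: "\<And>x. x \<in> V \<Longrightarrow> x \<noteq> 0 \<Longrightarrow> \<phi> x x > 0" and V: "subspace V"
  shows "\<exists>E. onb \<phi> V E \<and> card E = dim V"
proof -
  obtain B where B: "B \<subseteq> V" "independent B" "V \<subseteq> span B" "card B = dim V"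
    using basis_exists by blast
  have fB: "finite B" using B(2) by (simp add: finiteI_independent)
  have VB: "span B = V" using B V by (metis span_minimal subset_antisym)
  obtain E where E: "finite E" "E \<subseteq> V" "orthn \<phi> E" "span E = span B"
    using gram_schmidt_step[OF bil sym pos V fB B(1)] by blast
  have "independent E" using orthn_independent[OF bil E(3) E(1)] .
  then have "card E = dim V" using E(4) VB by (metis dim_span_eq_card_independent)
  moreover have "onb \<phi> V E" unfolding onb_def
    using E orthn_span_coeff[OF bil E(3) E(1)] VB by (auto simp: orthn_def)
  ultimately show ?thesis by blast
qed




definition linon :: "'a::euclidean_space set \<Rightarrow> ('a \<Rightarrow> real) \<Rightarrow> bool" where
  "linon V c \<longleftrightarrow> (\<forall>x\<in>V. \<forall>y\<in>V. c (x + y) = c x + c y) \<and> (\<forall>x\<in>V. \<forall>t. c (t *\<^sub>R x) = t * c x)"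

lemma linon_sum:
  assumes "linon V c" "subspace V" "\<And>i. i \<in> I \<Longrightarrow> v i \<in> V"
  shows "c (\<Sum>i\<in>I. t i *\<^sub>R v i) = (\<Sum>i\<in>I. t i * c (v i))"
  using assms(3)
proof (induction I rule: infinite_finite_induct)
  case (infinite A) then show ?case
    using assms(1,2) unfolding linon_def by (metis mult_zero_left scale_zero_left sum.infinite subspace_0)
next
  case empty then show ?case
    using assms(1,2) unfolding linon_def by (metis mult_zero_left scale_zero_left sum.empty subspace_0)
next
  case (insert x F)
  have "(\<Sum>i\<in>F. t i *\<^sub>R v i) \<in> V" using insert assms(2)
    by (intro subspace_sum) (auto intro: subspace_scale)
  moreover have "t x *\<^sub>R v x \<in> V" using insert assms(2) by (auto intro: subspace_scale)
  ultimately show ?case using insert assms(1) unfolding linon_def by simp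
qed

lemma dual_swap:
  assumes V: "subspace V" and fin: "finite E" "finite E'" and sub: "E \<subseteq> V" "E' \<subseteq> V"
    and cE: "\<And>x. x \<in> V \<Longrightarrow> x = (\<Sum>e\<in>E. c e x *\<^sub>R e)"
    and cE': "\<And>x. x \<in> V \<Longrightarrow> x = (\<Sum>e\<in>E'. c' e x *\<^sub>R e)"
    and lc: "\<And>e. e \<in> E \<Longrightarrow> linon V (c e)"
    and lc': "\<And>e. e \<in> E' \<Longrightarrow> linon V (c' e)"
    and f: "linear f" "\<And>x. x \<in> V \<Longrightarrow> f x \<in> V"
  shows "(\<Sum>e\<in>E. c e (f e)) = (\<Sum>e\<in>E'. c' e (f e))"
proof -
  have "(\<Sum>e\<in>E. c e (f e)) = (\<Sum>e\<in>E. c e (f (\<Sum>e'\<in>E'. c' e' e *\<^sub>R e')))"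
    using cE' sub by (intro sum.cong) auto
  also have "\<dots> = (\<Sum>e\<in>E. c e (\<Sum>e'\<in>E'. c' e' e *\<^sub>R f e'))"
    using f(1) by (simp add: linear_sum linear_scale)
  also have "\<dots> = (\<Sum>e\<in>E. \<Sum>e'\<in>E'. c' e' e * c e (f e'))"
    using lc sub f(2) by (intro sum.cong refl linon_sum[OF _ V]) auto
  also have "\<dots> = (\<Sum>e'\<in>E'. \<Sum>e\<in>E. c e (f e') * c' e' e)"
    by (subst sum.swap) (simp add: mult.commute)
  also have "\<dots> = (\<Sum>e'\<in>E'. c' e' (\<Sum>e\<in>E. c e (f e') *\<^sub>R e))"
    using lc' sub by (intro sum.cong refl linon_sum[OF _ V, symmetric]) auto
  also have "\<dots> = (\<Sum>e'\<in>E'. c' e' (f e'))"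
    using cE f(2) sub by (intro sum.cong refl) (metis subsetD)
  finally show ?thesis .
qed

lemma linon_linear: "linear c \<Longrightarrow> linon V c"
  unfolding linon_def by (simp add: linear_add linear_scale)

lemma trace_lin_dual:
  assumes fin: "finite E"
    and cE: "\<And>x. x = (\<Sum>e\<in>E. c e x *\<^sub>R e)"
    and lc: "\<And>e. e \<in> E \<Longrightarrow> linear (c e)"
    and f: "linear f"
  shows "trace_lin f = (\<Sum>e\<in>E. c e (f e))"
proof -
  have "(\<Sum>e\<in>E. c e (f e)) = (\<Sum>b\<in>(Basis::'a set). (\<lambda>b x. inner x b) b (f b))"
    by (rule dual_swap[where V=UNIV]) (auto simp: fin cE lc f linon_linear euclidean_representation
       intro: linon_linear bounded_linear.linear[OF bounded_linear_inner_left])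
  then show ?thesis unfolding trace_lin_def by simp
qed

lemma trace_on_dual:
  assumes V: "subspace V" and fin: "finite E" and sub: "E \<subseteq> V"
    and cE: "\<And>x. x \<in> V \<Longrightarrow> x = (\<Sum>e\<in>E. c e x *\<^sub>R e)"
    and lc: "\<And>e. e \<in> E \<Longrightarrow> linon V (c e)"
    and f: "linear f" "\<And>x. x \<in> V \<Longrightarrow> f x \<in> V"
  shows "trace_on V f = (\<Sum>e\<in>E. c e (f e))"
proof -
  let ?P = "\<lambda>t. \<exists>E. finite E \<and> independent E \<and> span E = V \<and>
       t = (\<Sum>e\<in>E. representation E (f e) e)"
  have key: "t = (\<Sum>e\<in>E. c e (f e))" if "?P t" for t
  proof -
    obtain B where B: "finite B" "independent B" "span B = V" "t = (\<Sum>e\<in>B. representation B (f e) e)"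
      using \<open>?P t\<close> by blast
    have "(\<Sum>e\<in>B. representation B (f e) e) = (\<Sum>e\<in>E. c e (f e))"
    proof (rule dual_swap[where c="\<lambda>e x. representation B x e", OF V B(1) fin _ sub _ cE _ lc f])
      show "B \<subseteq> V" using B(3) span_superset by blast
      show "x = (\<Sum>e\<in>B. representation B x e *\<^sub>R e)" if "x \<in> V" for x
        using real_vector.sum_representation_eq[OF B(2) _ B(1) subset_refl, of x] that B(3) by simp
      show "linon V (\<lambda>x. representation B x e)" for e
        unfolding linon_def B(3)[symmetric] using B(2) by (simp add: real_vector.representation_add real_vector.representation_scale)
    qed auto
    then show ?thesis using B(4) by simp
  qed
  obtain B where B: "B \<subseteq> V" "independent B" "V \<subseteq> span B" "card B = dim V"
    using basis_exists by blast
  have "?P (\<Sum>e\<in>B. representation B (f e) e)"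
    using B V span_minimal[OF B(1) V] by (intro exI[of _ B]) (auto simp: finiteI_independent)
  then have "?P (SOME t. ?P t)" by (rule someI)
  then show ?thesis unfolding trace_on_def using key by blast
qed

lemma onb_transfer:
  fixes g \<psi> :: "'a::euclidean_space \<Rightarrow> 'a \<Rightarrow> real"
  assumes fin: "finite E" "finite J"
    and sym: "\<And>x y. g x y = g y x"
    and cE: "\<And>x. x = (\<Sum>e\<in>E. g x e *\<^sub>R e)"
    and cJ: "\<And>x. x = (\<Sum>j\<in>J. g x (v j) *\<^sub>R v j)"
    and psi: "bilinear \<psi>"
  shows "(\<Sum>e\<in>E. \<psi> e e) = (\<Sum>j\<in>J. \<psi> (v j) (v j))"
proof -
  have "(\<Sum>e\<in>E. \<psi> e e) = (\<Sum>e\<in>E. \<psi> e (\<Sum>j\<in>J. g e (v j) *\<^sub>R v j))"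
    using cJ by (intro sum.cong) auto
  also have "\<dots> = (\<Sum>e\<in>E. \<Sum>j\<in>J. g e (v j) * \<psi> e (v j))"
    using psi by (simp add: bil_sumr bilinear_rmul)
  also have "\<dots> = (\<Sum>j\<in>J. \<Sum>e\<in>E. g (v j) e * \<psi> e (v j))"
    by (subst sum.swap) (simp add: sym)
  also have "\<dots> = (\<Sum>j\<in>J. \<psi> (\<Sum>e\<in>E. g (v j) e *\<^sub>R e) (v j))"
    using psi by (simp add: bil_suml bilinear_lmul)
  also have "\<dots> = (\<Sum>j\<in>J. \<psi> (v j) (v j))"
    using cE by (metis)
  finally show ?thesis .
qed




lemma lin0_span:
  fixes f :: "'a::euclidean_space \<Rightarrow> 'b::real_vector"
  assumes "linear f" "\<And>x. x \<in> S \<Longrightarrow> f x = 0" "x \<in> span S"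
  shows "f x = 0"
  using assms(3)
proof (induction rule: span_induct)
  case base show ?case using assms(1) by (rule linear_subspace_kernel)
next
  case (step x) then show ?case using assms(2) by simp
qed

lemma trace_lin_add: "linear f \<Longrightarrow> linear g \<Longrightarrow> trace_lin (\<lambda>z. f z + g z) = trace_lin f + trace_lin g"
  unfolding trace_lin_def by (simp add: inner_add_left sum.distrib)
lemma trace_lin_diff: "trace_lin (\<lambda>z. f z - g z) = trace_lin f - trace_lin g"
  unfolding trace_lin_def by (simp add: inner_diff_left sum_subtractf)
lemma trace_lin_add': "trace_lin (\<lambda>z. f z + g z) = trace_lin f + trace_lin g"
  unfolding trace_lin_def by (simp add: inner_add_left sum.distrib)
lemma trace_lin_scale: "trace_lin (\<lambda>z. c *\<^sub>R f z) = c * trace_lin f"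
  unfolding trace_lin_def by (simp add: sum_distrib_left)
lemma trace_lin_cong: "(\<And>z. f z = g z) \<Longrightarrow> trace_lin f = trace_lin g"
  by (metis ext)

lemma trace_lin_comm:
  fixes f g :: "'a::euclidean_space \<Rightarrow> 'a"
  assumes "linear f" "linear g"
  shows "trace_lin (\<lambda>z. f (g z)) = trace_lin (\<lambda>z. g (f z))"
proof -
  have *: "trace_lin (\<lambda>z. f (g z)) = (\<Sum>b\<in>Basis. \<Sum>c\<in>Basis. inner (g b) c * inner (f c) b)"
    if "linear f" "linear g" for f g :: "'a \<Rightarrow> 'a"
  proof -
    have "trace_lin (\<lambda>z. f (g z)) = (\<Sum>b\<in>Basis. inner (f (\<Sum>c\<in>Basis. inner (g b) c *\<^sub>R c)) b)"
      unfolding trace_lin_def by (simp add: euclidean_representation)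
    also have "\<dots> = (\<Sum>b\<in>Basis. \<Sum>c\<in>Basis. inner (g b) c * inner (f c) b)"
      using that(1) by (simp add: linear_sum linear_scale inner_sum_left)
    finally show ?thesis .
  qed
  show ?thesis unfolding *[OF assms] *[OF assms(2,1)]
    by (subst sum.swap) (simp add: mult.commute)
qed

context
  fixes br :: "'a::euclidean_space \<Rightarrow> 'a \<Rightarrow> 'a"
  assumes lie: "lie_bracket br"
begin

lemma br_bil: "bilinear br" using lie unfolding lie_bracket_def by simp
lemma br_lin_r: "linear (br x)" using br_bil unfolding bilinear_def by simp
lemma br_lin_l: "linear (\<lambda>x. br x y)" using br_bil unfolding bilinear_def by simp
lemma br_anti: "br x y = - br y x" using lie unfolding lie_bracket_def by blast
lemma br_self[simp]: "br x x = 0"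
proof -
  have "br x x = - br x x" by (rule br_anti)
  then have "br x x + br x x = 0" by (metis add.right_inverse)
  then have "2 *\<^sub>R br x x = 0" by (simp add: scaleR_2)
  then show ?thesis by simp
qed
lemma br_jac: "br x (br y z) + br y (br z x) + br z (br x y) = 0"
  using lie unfolding lie_bracket_def by blast

lemma br_addl: "br (x + y) z = br x z + br y z" by (rule bilinear_ladd[OF br_bil])
lemma br_addr: "br z (x + y) = br z x + br z y" by (rule bilinear_radd[OF br_bil])
lemma br_diffl: "br (x - y) z = br x z - br y z" by (rule bilinear_lsub[OF br_bil])
lemma br_diffr: "br z (x - y) = br z x - br z y" by (rule bilinear_rsub[OF br_bil])
lemma br_scalel: "br (c *\<^sub>R x) z = c *\<^sub>R br x z" by (rule bilinear_lmul[OF br_bil])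
lemma br_scaler: "br z (c *\<^sub>R x) = c *\<^sub>R br z x" by (rule bilinear_rmul[OF br_bil])
lemma br_0l[simp]: "br 0 z = 0" by (rule bilinear_lzero[OF br_bil])
lemma br_0r[simp]: "br z 0 = 0" by (rule bilinear_rzero[OF br_bil])
lemma br_suml: "br (\<Sum>i\<in>I. f i) z = (\<Sum>i\<in>I. br (f i) z)"
  by (rule bil_suml[OF br_bil])
lemma br_sumr: "br z (\<Sum>i\<in>I. f i) = (\<Sum>i\<in>I. br z (f i))"
  by (rule bil_sumr[OF br_bil])

lemma ad_br: "br (br x y) z = br x (br y z) - br y (br x z)"
proof -
  have "br (br x y) z = - br z (br x y)" by (rule br_anti)
  also have "\<dots> = br x (br y z) + br y (br z x)"
  proof -
    have "br z (br x y) + (br x (br y z) + br y (br z x)) = 0" using br_jac[of x y z] by (simp add: ac_simps)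
    then show ?thesis by (rule minus_unique)
  qed
  also have "br y (br z x) = - br y (br x z)" using br_anti[of z x] br_scaler[of y "-1"] by simp
  finally show ?thesis by simp
qed

lemma lin_brbr: "linear (\<lambda>z. br x (br y z))"
  using br_lin_r linear_compose[of "br y" "br x"] by (simp add: o_def)

lemma killing_sym: "killing br x y = killing br y x"
  unfolding killing_def using trace_lin_comm[OF br_lin_r br_lin_r] by simp

lemma killing_addl: "killing br (x + x') y = killing br x y + killing br x' y"
  unfolding killing_def by (simp add: br_addl trace_lin_add')
lemma killing_scalel: "killing br (c *\<^sub>R x) y = c * killing br x y"
  unfolding killing_def by (simp add: br_scalel trace_lin_scale)

lemma killing_bil: "bilinear (killing br)"
proof -
  have l: "linear (\<lambda>x. killing br x y)" for y
    by (rule linearI) (simp_all add: killing_addl killing_scalel)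
  have r: "linear (\<lambda>x. killing br y x)" for y
    using l[of y] by (simp add: killing_sym)
  show ?thesis unfolding bilinear_def using l r by simp
qed

lemma killing_inv: "killing br (br x y) z = - killing br y (br x z)"
proof -
  have "killing br (br x y) z = trace_lin (\<lambda>w. br x (br y (br z w))) - trace_lin (\<lambda>w. br y (br x (br z w)))"
    unfolding killing_def by (simp add: ad_br trace_lin_diff)
  moreover have "killing br y (br x z) = trace_lin (\<lambda>w. br y (br x (br z w))) - trace_lin (\<lambda>w. br y (br z (br x w)))"
    unfolding killing_def by (simp add: ad_br br_diffr trace_lin_diff)
  moreover have "trace_lin (\<lambda>w. br x (br y (br z w))) = trace_lin (\<lambda>w. br y (br z (br x w)))"
    using trace_lin_comm[OF br_lin_r lin_brbr, of x y z] by simp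
  ultimately show ?thesis by simp
qed

lemma tr_ad_zero:
  assumes simple: "simple_sub br UNIV"
  shows "trace_lin (br x) = 0"
proof -
  let ?D = "derived br UNIV"
  have "ideal_of br UNIV ?D" unfolding ideal_of_def derived_def
    by (auto intro: span_base)
  moreover have "?D \<noteq> {0}"
  proof -
    obtain a b where "br a b \<noteq> 0" using simple unfolding simple_sub_def by auto
    moreover have "br a b \<in> ?D" unfolding derived_def by (auto intro: span_base)
    ultimately show ?thesis by auto
  qed
  ultimately have D: "?D = UNIV" using simple unfolding simple_sub_def by blast
  have lt: "linear (\<lambda>x. trace_lin (br x))"
  proof (rule linearI)
    show "trace_lin (br (a + b)) = trace_lin (br a) + trace_lin (br b)" for a b
      using trace_lin_add'[of "br a" "br b"] ext[of "br (a+b)" "\<lambda>z. br a z + br b z", OF br_addl] by simp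
    show "trace_lin (br (c *\<^sub>R a)) = c *\<^sub>R trace_lin (br a)" for c a
      using trace_lin_scale[of c "br a"] ext[of "br (c *\<^sub>R a)" "\<lambda>z. c *\<^sub>R br a z", OF br_scalel] by simp
  qed
  have "trace_lin (br x) = 0" if hx: "x \<in> {br a b |a b. a \<in> UNIV \<and> b \<in> UNIV}" for x
  proof -
    obtain a b where x: "x = br a b" using hx by blast
    have "trace_lin (br (br a b)) = trace_lin (\<lambda>z. br a (br b z)) - trace_lin (\<lambda>z. br b (br a z))"
      using trace_lin_diff[of "\<lambda>z. br a (br b z)" "\<lambda>z. br b (br a z)"]
        ext[of "br (br a b)" "\<lambda>z. br a (br b z) - br b (br a z)", OF ad_br] by simp
    then show ?thesis using x trace_lin_comm[OF br_lin_r br_lin_r, of a b] by simp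
  qed
  moreover have "x \<in> span {br a b |a b. a \<in> UNIV \<and> b \<in> UNIV}" using D unfolding derived_def by auto
  ultimately show ?thesis using lin0_span[OF lt] by blast
qed

end




definition S3 :: "'b set \<Rightarrow> ('b \<Rightarrow> 'b \<Rightarrow> 'b \<Rightarrow> real) \<Rightarrow> real" where
  "S3 E f = (\<Sum>a\<in>E. \<Sum>b\<in>E. \<Sum>c\<in>E. f a b c)"

lemma S3_swap12: "S3 E f = S3 E (\<lambda>a b c. f b a c)"
  unfolding S3_def by (rule sum.swap)
lemma S3_swap23: "S3 E f = S3 E (\<lambda>a b c. f a c b)"
  unfolding S3_def by (intro sum.cong refl sum.swap)
lemma S3_cyc: "S3 E f = S3 E (\<lambda>a b c. f b c a)"
  using S3_swap23[of E f] S3_swap12[of E "\<lambda>a b c. f a c b"] by simp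
lemma S3_add: "S3 E (\<lambda>a b c. f a b c + h a b c) = S3 E f + S3 E h"
  unfolding S3_def by (simp add: sum.distrib)
lemma S3_diff: "S3 E (\<lambda>a b c. f a b c - h a b c) = S3 E f - S3 E h"
  unfolding S3_def by (simp add: sum_subtractf)
lemma S3_cmult: "S3 E (\<lambda>a b c. r * f a b c) = r * S3 E f"
  unfolding S3_def by (simp add: sum_distrib_left)
lemma S3_neg: "S3 E (\<lambda>a b c. - f a b c) = - S3 E f"
  unfolding S3_def by (simp add: sum_negf)
lemma S3_cong: "(\<And>a b c. f a b c = h a b c) \<Longrightarrow> S3 E f = S3 E h"
  unfolding S3_def by simp

lemma e_gen: "((u::real) - v + w)/2 * ((v - w + u)/2) + u * ((x - y + z)/2) =
     1/4 * u^2 - 1/4 * v^2 - 1/4 * w^2 + 1/2 * (v * w)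
     + 1/2 * (u * x) - 1/2 * (u * y) + 1/2 * (u * z)"
  unfolding power2_eq_square by (simp add: field_simps)

lemma comb_identity:
  fixes C :: "'b \<Rightarrow> 'b \<Rightarrow> 'b \<Rightarrow> real"
  assumes anti: "\<And>a b c. C a b c = - C b a c"
  defines "G \<equiv> \<lambda>a b c. (C a b c - C b c a + C c a b) / 2"
  shows "S3 E (\<lambda>a b c. G a b c * G b c a + C a b c * G c b a)
        = 1/4 * S3 E (\<lambda>a b c. (C a b c)^2) + 1/2 * S3 E (\<lambda>a b c. C a b c * C a c b)"
proof -
  let ?P = "S3 E (\<lambda>a b c. (C a b c)^2)" and ?Q = "S3 E (\<lambda>a b c. C a b c * C a c b)"
  have e: "G a b c * G b c a + C a b c * G c b a =
     1/4 * (C a b c)^2 - 1/4 * (C b c a)^2 - 1/4 * (C c a b)^2 + 1/2 * (C b c a * C c a b)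
     + 1/2 * (C a b c * C c b a) - 1/2 * (C a b c * C b a c) + 1/2 * (C a b c * C a c b)" for a b c
    unfolding G_def by (rule e_gen)
  have p1: "S3 E (\<lambda>a b c. (C b c a)^2) = ?P" by (rule S3_cyc[symmetric])
  have p2: "S3 E (\<lambda>a b c. (C c a b)^2) = ?P" using S3_cyc[of E "\<lambda>a b c. (C c a b)^2"] p1 by simp
  have q1: "S3 E (\<lambda>a b c. C a b c * C b c a) = - ?Q"
  proof -
    have "S3 E (\<lambda>a b c. C a b c * C b c a) = S3 E (\<lambda>a b c. - (C b a c * C b c a))"
      by (rule S3_cong) (subst anti[of a b c], simp)
    also have "\<dots> = - S3 E (\<lambda>a b c. C b a c * C b c a)" by (rule S3_neg)
    also have "S3 E (\<lambda>a b c. C b a c * C b c a) = ?Q" by (rule S3_swap12[symmetric])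
    finally show ?thesis .
  qed
  have q2: "S3 E (\<lambda>a b c. C b c a * C c a b) = - ?Q"
    using S3_cyc[of E "\<lambda>a b c. C a b c * C b c a"] q1 by simp
  have q3: "S3 E (\<lambda>a b c. C a b c * C c b a) = ?Q"
  proof -
    have "S3 E (\<lambda>a b c. C a b c * C c b a) = S3 E (\<lambda>a b c. - (C a b c * C b c a))"
      by (rule S3_cong) (subst anti[of c b a], simp)
    then show ?thesis using q1 S3_neg[of E "\<lambda>a b c. C a b c * C b c a"] by simp
  qed
  have p3: "S3 E (\<lambda>a b c. C a b c * C b a c) = - ?P"
  proof -
    have "S3 E (\<lambda>a b c. C a b c * C b a c) = S3 E (\<lambda>a b c. - ((C a b c)^2))"
      by (rule S3_cong) (subst anti[of b a c], simp add: power2_eq_square)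
    then show ?thesis using S3_neg[of E "\<lambda>a b c. (C a b c)^2"] by simp
  qed
  have "S3 E (\<lambda>a b c. G a b c * G b c a + C a b c * G c b a) =
     S3 E (\<lambda>a b c. 1/4 * (C a b c)^2 - 1/4 * (C b c a)^2 - 1/4 * (C c a b)^2 + 1/2 * (C b c a * C c a b)
     + 1/2 * (C a b c * C c b a) - 1/2 * (C a b c * C b a c) + 1/2 * (C a b c * C a c b))"
    by (rule S3_cong) (rule e)
  also have "\<dots> = 1/4 * ?P - 1/4 * S3 E (\<lambda>a b c. (C b c a)^2) - 1/4 * S3 E (\<lambda>a b c. (C c a b)^2)
     + 1/2 * S3 E (\<lambda>a b c. C b c a * C c a b) + 1/2 * S3 E (\<lambda>a b c. C a b c * C c b a)
     - 1/2 * S3 E (\<lambda>a b c. C a b c * C b a c) + 1/2 * ?Q"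
    by (simp only: S3_add S3_diff S3_cmult)
  also have "\<dots> = 1/4 * ?P + 1/2 * ?Q"
    unfolding p1 p2 q2 q3 p3 by simp
  finally show ?thesis .
qed




lemma scal_formula:
  fixes br :: "'a::euclidean_space \<Rightarrow> 'a \<Rightarrow> 'a" and g :: "'a \<Rightarrow> 'a \<Rightarrow> real"
  assumes lie: "lie_bracket br" and trad: "\<And>x. trace_lin (br x) = 0"
    and gb: "bilinear g" and gs: "\<And>x y. g x y = g y x"
    and fin: "finite E" and orth: "orthn g E" and cE: "\<And>x. x = (\<Sum>e\<in>E. g x e *\<^sub>R e)"
  shows "(\<Sum>a\<in>E. \<Sum>b\<in>E. g (curvature g br E a b b) a)
     = -1/4 * (\<Sum>a\<in>E. \<Sum>b\<in>E. g (br a b) (br a b)) - 1/2 * (\<Sum>a\<in>E. killing br a a)"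
proof -
  define gam where "gam X Y Z = (g (br X Y) Z - g (br Y Z) X + g (br Z X) Y) / 2" for X Y Z
  define C where "C a b c = g (br a b) c" for a b c
  have lc: "levi_civita g br E X Y = (\<Sum>e\<in>E. gam X Y e *\<^sub>R e)" for X Y
    unfolding levi_civita_def gam_def by simp
  have gl: "g (levi_civita g br E X Y) a = gam X Y a" if "a \<in> E" for X Y a
    unfolding lc by (rule orthn_sum_coeff[OF gb orth fin that])
  have lin2: "linear (\<lambda>Y. gam X Y Z)" for X Z
    by (rule linearI) (simp_all add: gam_def br_addl[OF lie] br_addr[OF lie] br_scalel[OF lie] br_scaler[OF lie]
        bilinear_ladd[OF gb] bilinear_radd[OF gb] bilinear_lmul[OF gb] bilinear_rmul[OF gb] field_simps)
  have lin1: "linear (\<lambda>X. gam X Y Z)" for Y Z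
    by (rule linearI) (simp_all add: gam_def br_addl[OF lie] br_addr[OF lie] br_scalel[OF lie] br_scaler[OF lie]
        bilinear_ladd[OF gb] bilinear_radd[OF gb] bilinear_lmul[OF gb] bilinear_rmul[OF gb] field_simps)
  have exp2: "gam X (\<Sum>c\<in>E. t c *\<^sub>R c) Z = (\<Sum>c\<in>E. t c * gam X c Z)" for X Z t
  proof -
    interpret l: linear "\<lambda>Y. gam X Y Z" by (rule lin2)
    show ?thesis by (simp add: l.sum l.scale)
  qed
  have exp1: "gam (\<Sum>c\<in>E. t c *\<^sub>R c) Y Z = (\<Sum>c\<in>E. t c * gam c Y Z)" for Y Z t
  proof -
    interpret l: linear "\<lambda>X. gam X Y Z" by (rule lin1)
    show ?thesis by (simp add: l.sum l.scale)
  qed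
  have pt: "g (curvature g br E a b b) a =
      (\<Sum>c\<in>E. gam b b c * gam a c a) - (\<Sum>c\<in>E. gam a b c * gam b c a + C a b c * gam c b a)"
    if "a \<in> E" for a b
  proof -
    have "g (curvature g br E a b b) a = gam a (levi_civita g br E b b) a - gam b (levi_civita g br E a b) a
         - gam (br a b) b a"
      unfolding curvature_def using that by (simp add: bilinear_lsub[OF gb] gl)
    also have "gam a (levi_civita g br E b b) a = (\<Sum>c\<in>E. gam b b c * gam a c a)"
      unfolding lc by (rule exp2)
    also have "gam b (levi_civita g br E a b) a = (\<Sum>c\<in>E. gam a b c * gam b c a)"
      unfolding lc by (rule exp2)
    also have "gam (br a b) b a = (\<Sum>c\<in>E. C a b c * gam c b a)"
      using exp1[of "\<lambda>c. g (br a b) c" b a] cE[of "br a b"] unfolding C_def by simp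
    finally show ?thesis by (simp add: sum.distrib)
  qed
  have t0: "(\<Sum>a\<in>E. gam a c a) = 0" for c
  proof -
    have "gam a c a = - g (br c a) a" for a
      unfolding gam_def using br_anti[OF lie, of a c] by (simp add: bilinear_lneg[OF gb] br_self[OF lie] bilinear_lzero[OF gb])
    then have "(\<Sum>a\<in>E. gam a c a) = - (\<Sum>a\<in>E. g (br c a) a)" by (simp add: sum_negf)
    also have "(\<Sum>a\<in>E. g (br c a) a) = trace_lin (br c)"
      by (rule trace_lin_dual[symmetric, OF fin cE _ br_lin_r[OF lie]])
         (use gb in \<open>simp add: bilinear_def\<close>)
    finally show ?thesis using trad by simp
  qed
  have T1: "(\<Sum>a\<in>E. \<Sum>b\<in>E. \<Sum>c\<in>E. gam b b c * gam a c a) = 0"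
  proof -
    have "(\<Sum>a\<in>E. \<Sum>b\<in>E. \<Sum>c\<in>E. gam b b c * gam a c a) = (\<Sum>b\<in>E. \<Sum>c\<in>E. \<Sum>a\<in>E. gam b b c * gam a c a)"
      by (subst sum.swap) (intro sum.cong refl sum.swap)
    also have "\<dots> = (\<Sum>b\<in>E. \<Sum>c\<in>E. gam b b c * (\<Sum>a\<in>E. gam a c a))"
      by (simp add: sum_distrib_left)
    finally show ?thesis using t0 by simp
  qed
  have anti: "C a b c = - C b a c" for a b c
    unfolding C_def using br_anti[OF lie, of a b] by (simp add: bilinear_lneg[OF gb])
  have gamC: "gam a b c = (C a b c - C b c a + C c a b) / 2" for a b c
    unfolding gam_def C_def ..
  have main: "(\<Sum>a\<in>E. \<Sum>b\<in>E. g (curvature g br E a b b) a) =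
     - (1/4 * S3 E (\<lambda>a b c. (C a b c)^2) + 1/2 * S3 E (\<lambda>a b c. C a b c * C a c b))"
  proof -
    have "(\<Sum>a\<in>E. \<Sum>b\<in>E. g (curvature g br E a b b) a) =
      (\<Sum>a\<in>E. \<Sum>b\<in>E. \<Sum>c\<in>E. gam b b c * gam a c a) - S3 E (\<lambda>a b c. gam a b c * gam b c a + C a b c * gam c b a)"
      unfolding S3_def by (simp add: pt sum_subtractf)
    also have "S3 E (\<lambda>a b c. gam a b c * gam b c a + C a b c * gam c b a) =
       1/4 * S3 E (\<lambda>a b c. (C a b c)^2) + 1/2 * S3 E (\<lambda>a b c. C a b c * C a c b)"
      unfolding gamC by (rule comb_identity[OF anti])
    finally show ?thesis using T1 by simp
  qed
  have P: "(\<Sum>a\<in>E. \<Sum>b\<in>E. g (br a b) (br a b)) = S3 E (\<lambda>a b c. (C a b c)^2)"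
  proof -
    have "g w w = (\<Sum>c\<in>E. (g w c)^2)" for w
    proof -
      have "g w w = g w (\<Sum>c\<in>E. g w c *\<^sub>R c)" using cE[of w] by simp
      then show ?thesis by (simp add: bil_sumr[OF gb] bilinear_rmul[OF gb] power2_eq_square)
    qed
    then show ?thesis unfolding S3_def C_def by simp
  qed
  have Q: "(\<Sum>a\<in>E. killing br a a) = S3 E (\<lambda>a b c. C a b c * C a c b)"
  proof -
    have "killing br a a = (\<Sum>b\<in>E. \<Sum>c\<in>E. C a b c * C a c b)" for a
    proof -
      have "killing br a a = (\<Sum>b\<in>E. g (br a (br a b)) b)"
        unfolding killing_def
        by (rule trace_lin_dual[OF fin cE _ lin_brbr[OF lie]]) (use gb in \<open>simp add: bilinear_def\<close>)
      also have "\<dots> = (\<Sum>b\<in>E. g (br a (\<Sum>c\<in>E. C a b c *\<^sub>R c)) b)"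
      proof (intro sum.cong refl)
        fix b
        have "br a b = (\<Sum>c\<in>E. g (br a b) c *\<^sub>R c)" by (rule cE)
        then show "g (br a (br a b)) b = g (br a (\<Sum>c\<in>E. C a b c *\<^sub>R c)) b"
          unfolding C_def by simp
      qed
      also have "\<dots> = (\<Sum>b\<in>E. \<Sum>c\<in>E. C a b c * C a c b)"
        unfolding C_def by (simp add: br_sumr[OF lie] br_scaler[OF lie] bil_suml[OF gb] bilinear_lmul[OF gb])
      finally show ?thesis .
    qed
    then show ?thesis unfolding S3_def by simp
  qed
  show ?thesis unfolding main P Q by simp
qed




locale cart =
  fixes br :: "'a::euclidean_space \<Rightarrow> 'a \<Rightarrow> 'a" and k :: "'a set"
  assumes lie: "lie_bracket br" and cartan: "cartan_k br k"
begin

abbreviation "B \<equiv> killing br"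
abbreviation "p \<equiv> perp_k br k"
abbreviation "Q \<equiv> Qform br k"

lemma ksub: "subspace k" using cartan unfolding cartan_k_def by simp
lemma kbr: "x \<in> k \<Longrightarrow> y \<in> k \<Longrightarrow> br x y \<in> k" using cartan unfolding cartan_k_def by simp
lemma kpbr: "x \<in> k \<Longrightarrow> y \<in> p \<Longrightarrow> br x y \<in> p" using cartan unfolding cartan_k_def by simp
lemma ppbr: "x \<in> p \<Longrightarrow> y \<in> p \<Longrightarrow> br x y \<in> k" using cartan unfolding cartan_k_def by simp
lemma kneg: "x \<in> k \<Longrightarrow> x \<noteq> 0 \<Longrightarrow> B x x < 0" using cartan unfolding cartan_k_def by simp
lemma ppos: "x \<in> p \<Longrightarrow> x \<noteq> 0 \<Longrightarrow> B x x > 0" using cartan unfolding cartan_k_def by simp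
lemma decomp: "\<exists>u\<in>k. \<exists>v\<in>p. x = u + v" using cartan unfolding cartan_k_def by simp

lemma Bbil: "bilinear B" by (rule killing_bil[OF lie])
lemma Bsym: "B x y = B y x" by (rule killing_sym[OF lie])
lemma Binv: "B (br x y) z = - B y (br x z)" by (rule killing_inv[OF lie])

lemma kzero: "x \<in> k \<Longrightarrow> B x x = 0 \<Longrightarrow> x = 0" using kneg by force
lemma pzero: "x \<in> p \<Longrightarrow> B x x = 0 \<Longrightarrow> x = 0" using ppos by force

lemma psub: "subspace p"
  unfolding subspace_def perp_k_def
  by (auto simp: bilinear_ladd[OF Bbil] bilinear_lmul[OF Bbil] bilinear_lzero[OF Bbil])

lemma Bkp: "x \<in> k \<Longrightarrow> y \<in> p \<Longrightarrow> B x y = 0"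
  unfolding perp_k_def using Bsym by auto
lemma Bpk: "x \<in> p \<Longrightarrow> y \<in> k \<Longrightarrow> B x y = 0"
  unfolding perp_k_def by auto

lemma kp0: "x \<in> k \<Longrightarrow> x \<in> p \<Longrightarrow> x = 0"
  using Bkp kzero by blast

lemma decomp_unique:
  assumes "u \<in> k" "v \<in> p" "u' \<in> k" "v' \<in> p" "u + v = u' + v'"
  shows "u = u'" "v = v'"
proof -
  have "u - u' = v' - v" using assms(5) by (simp add: algebra_simps)
  moreover have "u - u' \<in> k" using assms ksub by (simp add: subspace_diff)
  moreover have "v' - v \<in> p" using assms psub by (simp add: subspace_diff)
  ultimately have "u - u' = 0" using kp0 by metis
  then show "u = u'" by simp
  then show "v = v'" using assms(5) by simp
qed

definition kc :: "'a \<Rightarrow> 'a" where "kc x = fproj B k x"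

lemma kc_eq:
  assumes "u \<in> k" "v \<in> p" "x = u + v"
  shows "kc x = u"
  unfolding kc_def fproj_def
proof (rule the_equality)
  show "u \<in> k \<and> (\<forall>w\<in>k. B (x - u) w = 0)" using assms Bpk by auto
  fix u' assume h: "u' \<in> k \<and> (\<forall>w\<in>k. B (x - u') w = 0)"
  have d: "u - u' \<in> k" using h assms ksub by (simp add: subspace_diff)
  have "B (u - u') w = B (x - u') w - B (x - u) w" for w
    by (simp add: bilinear_lsub[OF Bbil, symmetric])
  then have "B (u - u') (u - u') = 0" using h d assms(1) Bpk assms by auto
  then have "u - u' = 0" using kzero d by blast
  then show "u' = u" by simp
qed

definition pc :: "'a \<Rightarrow> 'a" where "pc x = x - kc x"

lemma kc_pc: "kc x \<in> k" "pc x \<in> p" "x = kc x + pc x"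
proof -
  obtain u v where uv: "u \<in> k" "v \<in> p" "x = u + v" using decomp by blast
  then have "kc x = u" by (rule kc_eq)
  then show "kc x \<in> k" "pc x \<in> p" "x = kc x + pc x" using uv unfolding pc_def by auto
qed

lemma kc_k: "x \<in> k \<Longrightarrow> kc x = x" using kc_eq[of x 0 x] psub by (simp add: subspace_0)
lemma kc_p: "x \<in> p \<Longrightarrow> kc x = 0" using kc_eq[of 0 x x] ksub by (simp add: subspace_0)
lemma pc_k: "x \<in> k \<Longrightarrow> pc x = 0" by (simp add: pc_def kc_k)
lemma pc_p: "x \<in> p \<Longrightarrow> pc x = x" by (simp add: pc_def kc_p)

lemma kc_lin: "linear kc"
proof (rule linearI)
  fix x y
  show "kc (x + y) = kc x + kc y"
    using kc_eq[of "kc x + kc y" "pc x + pc y" "x + y"] kc_pc[of x] kc_pc[of y] ksub psub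
    by (simp add: subspace_add algebra_simps)
next
  fix c x
  show "kc (c *\<^sub>R x) = c *\<^sub>R kc x"
    using kc_eq[of "c *\<^sub>R kc x" "c *\<^sub>R pc x" "c *\<^sub>R x"] kc_pc[of x] ksub psub
    by (simp add: subspace_scale scaleR_add_right[symmetric])
qed

lemma pc_lin: "linear pc"
  unfolding pc_def using kc_lin by (intro linear_compose_sub linear_id[unfolded id_def]) 

lemma Q_eq: "Q x y = B (pc x) (pc y) - B (kc x) (kc y)"
  unfolding Qform_def pc_def kc_def ..

lemma Qbil: "bilinear Q"
proof -
  interpret a: linear kc by (rule kc_lin)
  interpret b: linear pc by (rule pc_lin)
  show ?thesis unfolding bilinear_def Q_eq
    by (auto intro!: linearI simp: a.add a.scale b.add b.scale bilinear_ladd[OF Bbil] bilinear_radd[OF Bbil]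
        bilinear_lmul[OF Bbil] bilinear_rmul[OF Bbil] algebra_simps)
qed

lemma Qsym: "Q x y = Q y x" unfolding Q_eq using Bsym by metis

lemma Qpos: "x \<noteq> 0 \<Longrightarrow> Q x x > 0"
proof -
  assume x: "x \<noteq> 0"
  have a: "B (pc x) (pc x) \<ge> 0" using ppos[of "pc x"] kc_pc(2)[of x]
    by (cases "pc x = 0") (auto simp: bilinear_lzero[OF Bbil])
  have b: "B (kc x) (kc x) \<le> 0" using kneg[of "kc x"] kc_pc(1)[of x]
    by (cases "kc x = 0") (auto simp: bilinear_lzero[OF Bbil])
  have "pc x \<noteq> 0 \<or> kc x \<noteq> 0" using x kc_pc(3)[of x] by (metis add_0_left)
  then have "B (pc x) (pc x) > 0 \<or> B (kc x) (kc x) < 0" using ppos kneg kc_pc(1,2) by blast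
  then show ?thesis unfolding Q_eq using a b by linarith
qed

lemma Q_kk: "x \<in> k \<Longrightarrow> y \<in> k \<Longrightarrow> Q x y = - B x y"
  by (simp add: Q_eq pc_k kc_k bilinear_lzero[OF Bbil])
lemma Q_pp: "x \<in> p \<Longrightarrow> y \<in> p \<Longrightarrow> Q x y = B x y"
  by (simp add: Q_eq pc_p kc_p bilinear_lzero[OF Bbil])
lemma Q_kp: "x \<in> k \<Longrightarrow> y \<in> p \<Longrightarrow> Q x y = 0"
  by (simp add: Q_eq pc_p kc_p pc_k kc_k bilinear_lzero[OF Bbil] bilinear_rzero[OF Bbil])
lemma Q_pk: "x \<in> p \<Longrightarrow> y \<in> k \<Longrightarrow> Q x y = 0"
  using Q_kp Qsym by metis

lemma proj_k:
  assumes W: "subspace W" "W \<subseteq> k" and x: "x \<in> k"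
  shows "\<exists>w\<in>W. x - w \<in> k \<and> (\<forall>y\<in>W. B (x - w) y = 0)"
proof -
  obtain E where E: "onb Q W E" using onb_exists[OF Qbil Qsym _ W(1)] Qpos by blast
  define w where "w = (\<Sum>e\<in>E. Q x e *\<^sub>R e)"
  have wW: "w \<in> W" unfolding w_def using E W(1) unfolding onb_def
    by (auto intro!: subspace_sum subspace_scale)
  have xw: "x - w \<in> k" using wW W x ksub by (auto simp: subspace_diff)
  have "B (x - w) y = 0" if y: "y \<in> W" for y
  proof -
    have yk: "y \<in> k" using y W by auto
    have "Q (x - w) y = Q x y - Q w y" by (simp add: bilinear_lsub[OF Qbil])
    also have "Q w y = (\<Sum>e\<in>E. Q x e * Q e y)"
      unfolding w_def by (simp add: bil_suml[OF Qbil] bilinear_lmul[OF Qbil])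
    also have "\<dots> = (\<Sum>e\<in>E. Q y e * Q x e)" using Qsym by (simp add: mult.commute)
    also have "\<dots> = Q x (\<Sum>e\<in>E. Q y e *\<^sub>R e)"
      by (simp add: bil_sumr[OF Qbil] bilinear_rmul[OF Qbil])
    also have "(\<Sum>e\<in>E. Q y e *\<^sub>R e) = y" using E y unfolding onb_def by auto
    finally have "Q (x - w) y = 0" by simp
    then show ?thesis using Q_kk[OF xw yk] by simp
  qed
  then show ?thesis using wW xw by blast
qed

end




locale strct = cart br k for br :: "'a::euclidean_space \<Rightarrow> 'a \<Rightarrow> 'a" and k +
  fixes K :: "nat \<Rightarrow> 'a set" and r s :: nat
  assumes simple_ideals: "\<forall>i\<in>{1..r}. ideal_of br (derived br k) (K i) \<and> simple_sub br (K i)"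
    and all_simple_ideals: "\<forall>I. ideal_of br (derived br k) I \<and> simple_sub br I \<longrightarrow> (\<exists>i\<in>{1..r}. I = K i)"
    and distinct: "inj_on K {1..r}"
    and s_def: "s = (if centre br k = {0} then 0 else 1)"
    and centre_K: "s = 1 \<longrightarrow> K (r + 1) = centre br k"
begin

abbreviation "d \<equiv> derived br k"
abbreviation "z \<equiv> centre br k"
abbreviation "J \<equiv> span (\<Union>i\<in>{1..r}. K i)"

lemma d_subspace: "subspace d" unfolding derived_def by simp
lemma d_sub: "d \<subseteq> k" unfolding derived_def by (rule span_minimal) (use kbr ksub in auto)
lemma d_br: "x \<in> k \<Longrightarrow> y \<in> k \<Longrightarrow> br x y \<in> d" unfolding derived_def by (auto intro: span_base)

lemma Ki: assumes "i \<in> {1..r}"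
  shows "subspace (K i)" "K i \<subseteq> d" "\<And>x y. x \<in> d \<Longrightarrow> y \<in> K i \<Longrightarrow> br x y \<in> K i" "simple_sub br (K i)"
  using simple_ideals assms unfolding ideal_of_def by auto

lemma Ki_k: "i \<in> {1..r} \<Longrightarrow> K i \<subseteq> k" using Ki(2) d_sub by blast

lemma z_props: "subspace z" "z \<subseteq> k" "\<And>x y. x \<in> z \<Longrightarrow> y \<in> k \<Longrightarrow> br x y = 0"
proof -
  show "subspace z" unfolding subspace_def centre_def using ksub
    by (auto simp: subspace_0 subspace_add subspace_scale br_addl[OF lie] br_scalel[OF lie] br_0l[OF lie])
  show "z \<subseteq> k" unfolding centre_def by auto
  show "\<And>x y. x \<in> z \<Longrightarrow> y \<in> k \<Longrightarrow> br x y = 0" unfolding centre_def by auto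
qed

lemma B_lin: "linear (B x)"
  using Bbil unfolding bilinear_def by simp

lemma B_z_d: assumes "x \<in> z" "y \<in> d" shows "B x y = 0"
proof -
  have "B x w = 0" if hw: "w \<in> {br a b |a b. a \<in> k \<and> b \<in> k}" for w
  proof -
    obtain a b where w: "w = br a b" "a \<in> k" "b \<in> k" using hw by blast
    have "br a x = 0" using z_props(3)[OF assms(1) w(2)] br_anti[OF lie, of a x] by simp
    then show ?thesis using Binv[of a x b] w by (simp add: bilinear_lzero[OF Bbil])
  qed
  then show ?thesis using lin0_span[OF B_lin] assms(2) unfolding derived_def by blast
qed

lemma Ki_derived: assumes i: "i \<in> {1..r}"
  shows "K i \<subseteq> span {br a b |a b. a \<in> K i \<and> b \<in> K i}"
proof -
  let ?D = "span {br a b |a b. a \<in> K i \<and> b \<in> K i}"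
  have brK: "a \<in> K i \<Longrightarrow> b \<in> K i \<Longrightarrow> br a b \<in> K i" for a b using Ki[OF i] by blast
  have DK: "?D \<subseteq> K i" by (rule span_minimal) (use brK Ki(1)[OF i] in auto)
  have "ideal_of br (K i) ?D" unfolding ideal_of_def using DK
    by (auto intro!: span_base)
  moreover have "?D \<noteq> {0}"
  proof -
    obtain a b where "a \<in> K i" "b \<in> K i" "br a b \<noteq> 0" using Ki(4)[OF i] unfolding simple_sub_def by blast
    then show ?thesis by (metis (mono_tags, lifting) mem_Collect_eq singletonD span_base)
  qed
  ultimately have "?D = K i" using Ki(4)[OF i] unfolding simple_sub_def by blast
  then show ?thesis by simp
qed

lemma K_inter: assumes "i \<in> {1..r}" "j \<in> {1..r}" "i \<noteq> j" shows "K i \<inter> K j = {0}"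
proof -
  have I: "ideal_of br (K i) (K i \<inter> K j)" "ideal_of br (K j) (K i \<inter> K j)"
    unfolding ideal_of_def using Ki[OF assms(1)] Ki[OF assms(2)]
    by (auto simp: subspace_inter)
  have a: "K i \<inter> K j = {0} \<or> K i \<inter> K j = K i" using I(1) Ki(4)[OF assms(1)] unfolding simple_sub_def by blast
  have b: "K i \<inter> K j = {0} \<or> K i \<inter> K j = K j" using I(2) Ki(4)[OF assms(2)] unfolding simple_sub_def by blast
  have "K i \<noteq> K j" using distinct assms unfolding inj_on_def by blast
  then show ?thesis using a b by blast
qed

lemma K_br0: assumes "i \<in> {1..r}" "j \<in> {1..r}" "i \<noteq> j" "x \<in> K i" "y \<in> K j"
  shows "br x y = 0"
proof -
  have "br x y \<in> K j" using Ki[OF assms(2)] Ki[OF assms(1)] assms(4,5) by blast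
  moreover have "br y x \<in> K i" using Ki[OF assms(2)] Ki[OF assms(1)] assms(4,5) by blast
  then have "br x y \<in> K i" using br_anti[OF lie, of x y] Ki(1)[OF assms(1)] by (simp add: subspace_neg)
  ultimately show ?thesis using K_inter[OF assms(1-3)] by blast
qed

lemma K_B0: assumes "i \<in> {1..r}" "j \<in> {1..r}" "i \<noteq> j" "x \<in> K i" "y \<in> K j"
  shows "B x y = 0"
proof -
  have "B x w = 0" if hw: "w \<in> {br a b |a b. a \<in> K j \<and> b \<in> K j}" for w
  proof -
    obtain a b where w: "w = br a b" "a \<in> K j" "b \<in> K j" using hw by blast
    have "br a x = 0" using K_br0[OF assms(2,1) _ w(2) assms(4)] assms(3) by simp
    then show ?thesis using Binv[of a x b] w by (simp add: bilinear_lzero[OF Bbil])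
  qed
  then show ?thesis using lin0_span[OF B_lin] Ki_derived[OF assms(2)] assms(5) by blast
qed

lemma k_dz: assumes x: "x \<in> k" shows "\<exists>a\<in>d. \<exists>c\<in>z. x = a + c"
proof -
  obtain w where w: "w \<in> d" "x - w \<in> k" "\<forall>y\<in>d. B (x - w) y = 0"
    using proj_k[OF d_subspace d_sub x] by blast
  let ?c = "x - w"
  have "br ?c y = 0" if y: "y \<in> k" for y
  proof -
    have cd: "br ?c y \<in> d" using d_br[OF w(2) y] .
    have "B (br ?c y) v = 0" if v: "v \<in> d" for v
    proof -
      have "br y v \<in> d" using d_br[OF y] v d_sub by blast
      then have "B ?c (br y v) = 0" using w(3) by blast
      moreover have "B (br ?c y) v = - B (br y ?c) v" using br_anti[OF lie, of ?c y]
        by (simp add: bilinear_lneg[OF Bbil])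
      ultimately show ?thesis using Binv[of y ?c v] by simp
    qed
    then have "B (br ?c y) (br ?c y) = 0" using cd by blast
    then show ?thesis using kzero cd d_sub by blast
  qed
  then have "?c \<in> z" unfolding centre_def using w(2) by blast
  then show ?thesis using w(1) by (intro bexI[of _ w] bexI[of _ ?c]) auto
qed

lemma J_sub: "J \<subseteq> d"
proof (rule span_minimal)
  show "(\<Union>i\<in>{1..r}. K i) \<subseteq> d" using Ki(2) by blast
qed (rule d_subspace)
lemma J_ideal: assumes a: "a \<in> d" and y: "y \<in> J" shows "br a y \<in> J"
  using y
proof (induction rule: span_induct)
  case base
  show ?case unfolding subspace_def
    by (auto simp: br_addr[OF lie] br_scaler[OF lie] br_0r[OF lie] span_add span_scale span_zero)
next
  case (step x)
  then obtain i where "i \<in> {1..r}" "x \<in> K i" by blast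
  then show ?case using Ki(3) a by (auto intro!: span_base)
qed

lemma perp_ideal:
  assumes W: "ideal_of br d W"
  shows "ideal_of br d {x\<in>d. \<forall>y\<in>W. B x y = 0}"
  unfolding ideal_of_def
proof (intro conjI ballI)
  show "subspace {x\<in>d. \<forall>y\<in>W. B x y = 0}" using d_subspace unfolding subspace_def
    by (auto simp: bilinear_ladd[OF Bbil] bilinear_lmul[OF Bbil] bilinear_lzero[OF Bbil])
  show "{x\<in>d. \<forall>y\<in>W. B x y = 0} \<subseteq> d" by auto
  fix a m assume a: "a \<in> d" and m: "m \<in> {x\<in>d. \<forall>y\<in>W. B x y = 0}"
  have "br a m \<in> d" using d_br a m d_sub by blast
  moreover have "B (br a m) y = 0" if "y \<in> W" for y
    using Binv[of a m y] W that a m unfolding ideal_of_def by auto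
  ultimately show "br a m \<in> {x\<in>d. \<forall>y\<in>W. B x y = 0}" by blast
qed

lemma d_J: "d \<subseteq> J"
proof (rule ccontr)
  assume "\<not> d \<subseteq> J"
  then obtain x where x: "x \<in> d" "x \<notin> J" by blast
  have Jk: "J \<subseteq> k" using J_sub d_sub by blast
  obtain w where w: "w \<in> J" "x - w \<in> k" "\<forall>y\<in>J. B (x - w) y = 0"
    using proj_k[OF subspace_span Jk] x d_sub by blast
  define M where "M = {x\<in>d. \<forall>y\<in>J. B x y = 0}"
  have Jid: "ideal_of br d J" unfolding ideal_of_def using J_sub J_ideal by auto
  have Mid: "ideal_of br d M" unfolding M_def by (rule perp_ideal[OF Jid])
  have "x - w \<in> M" unfolding M_def using w x J_sub d_subspace by (auto simp: subspace_diff)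
  moreover have "x - w \<noteq> 0" using x w by auto
  ultimately have M0: "M \<noteq> {0}" by blast
  define P where "P I \<longleftrightarrow> ideal_of br d I \<and> I \<subseteq> M \<and> I \<noteq> {0}" for I
  have "P M" unfolding P_def using Mid M0 by simp
  then obtain I where PI: "P I" and Imin: "\<And>I'. P I' \<Longrightarrow> dim I \<le> dim I'"
    using ex_has_least_nat[of P M dim] by blast
  have Iid: "ideal_of br d I" and IM: "I \<subseteq> M" and I0: "I \<noteq> {0}" using PI unfolding P_def by auto
  have Isub: "subspace I" "I \<subseteq> d" using Iid unfolding ideal_of_def by auto
  have Ibr: "a \<in> d \<Longrightarrow> b \<in> I \<Longrightarrow> br a b \<in> I" for a b using Iid unfolding ideal_of_def by auto
  define Ip where "Ip = {x\<in>d. \<forall>y\<in>I. B x y = 0}"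
  have Ipid: "ideal_of br d Ip" unfolding Ip_def by (rule perp_ideal[OF Iid])
  have dec: "\<exists>w\<in>I. v - w \<in> Ip" if v: "v \<in> d" for v
  proof -
    obtain w where w: "w \<in> I" "v - w \<in> k" "\<forall>y\<in>I. B (v - w) y = 0"
      using proj_k[OF Isub(1)] Isub(2) d_sub v by blast
    have "v - w \<in> d" using v w Isub d_subspace by (auto simp: subspace_diff)
    then show ?thesis using w unfolding Ip_def by blast
  qed
  have IIp: "br a b = 0" if a: "a \<in> I" and b: "b \<in> Ip" for a b
  proof -
    have bd: "b \<in> d" using b unfolding Ip_def by auto
    have "br b a \<in> I" using Ibr bd a by blast
    then have c1: "br a b \<in> I" using br_anti[OF lie, of a b] Isub(1) by (simp add: subspace_neg)
    have c2: "br a b \<in> Ip" using Ipid a b Isub unfolding ideal_of_def by blast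
    have "B (br a b) (br a b) = 0" using c1 c2 unfolding Ip_def by auto
    then show ?thesis using kzero c1 Isub(2) d_sub by blast
  qed
  have simpleI: "simple_sub br I"
    unfolding simple_sub_def
  proof (intro conjI allI impI)
    show "\<exists>x\<in>I. \<exists>y\<in>I. br x y \<noteq> 0"
    proof (rule ccontr)
      assume ab: "\<not> (\<exists>x\<in>I. \<exists>y\<in>I. br x y \<noteq> 0)"
      obtain m where m: "m \<in> I" "m \<noteq> 0" using I0 Isub(1) subspace_0 by blast
      have mk: "m \<in> k" using m Isub d_sub by blast
      have "br m y = 0" if y: "y \<in> k" for y
      proof -
        obtain a c where ac: "a \<in> d" "c \<in> z" "y = a + c" using k_dz[OF y] by blast
        have "br c m = 0" using z_props(3)[OF ac(2) mk] .
        then have mc: "br m c = 0" using br_anti[OF lie, of m c] by simp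
        obtain w where w: "w \<in> I" "a - w \<in> Ip" using dec[OF ac(1)] by blast
        have "br m w = 0" using ab m w by blast
        moreover have "br m (a - w) = 0" using IIp[OF m(1) w(2)] .
        ultimately have "br m a = 0" by (simp add: br_diffr[OF lie])
        then show ?thesis using ac mc by (simp add: br_addr[OF lie])
      qed
      then have "m \<in> z" unfolding centre_def using mk by blast
      then have "B m m = 0" using B_z_d m Isub by blast
      then show False using kzero mk m by blast
    qed
  next
    fix L assume L: "ideal_of br I L"
    have Lsub: "subspace L" "L \<subseteq> I" using L unfolding ideal_of_def by auto
    have "ideal_of br d L" unfolding ideal_of_def
    proof (intro conjI ballI)
      show "subspace L" by (rule Lsub(1))
      show "L \<subseteq> d" using Lsub Isub by blast
      fix v l assume v: "v \<in> d" and l: "l \<in> L"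
      obtain w where w: "w \<in> I" "v - w \<in> Ip" using dec[OF v] by blast
      have "br w l \<in> L" using L w l unfolding ideal_of_def by blast
      moreover have "br l (v - w) = 0" using IIp[of l "v - w"] l Lsub w by blast
      then have "br (v - w) l = 0" using br_anti[OF lie, of "v - w" l] by simp
      ultimately show "br v l \<in> L" by (simp add: br_diffl[OF lie])
    qed
    then have "L = {0} \<or> P L" unfolding P_def using Lsub IM by blast
    then show "L = {0} \<or> L = I"
    proof
      assume "P L"
      then have "dim I \<le> dim L" by (rule Imin)
      then show ?thesis using subspace_dim_equal[OF Lsub(1) Isub(1) Lsub(2)] by blast
    qed simp
  qed
  obtain i where i: "i \<in> {1..r}" "I = K i" using all_simple_ideals Iid simpleI by blast
  have "\<forall>v\<in>I. v = 0"
  proof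
    fix v assume v: "v \<in> I"
    have "v \<in> (\<Union>i\<in>{1..r}. K i)" using i v by blast
    then have "v \<in> J" by (rule span_base)
    then have "B v v = 0" using v IM unfolding M_def by blast
    then show "v = 0" using kzero v Isub d_sub by blast
  qed
  then show False using I0 Isub(1) subspace_0 by blast
qed

end




lemma span_sum_subspaces:
  fixes V :: "nat \<Rightarrow> 'a::euclidean_space set"
  assumes fin: "finite I" and sub: "\<And>i. i \<in> I \<Longrightarrow> subspace (V i)"
    and x: "x \<in> span (\<Union>i\<in>I. V i)"
  shows "\<exists>u. (\<forall>i\<in>I. u i \<in> V i) \<and> x = (\<Sum>i\<in>I. u i)"
  using x
proof (induction rule: span_induct)
  case base
  show ?case
  proof (rule subspaceI)
    show "0 \<in> Collect (\<lambda>x. \<exists>u. (\<forall>i\<in>I. u i \<in> V i) \<and> x = sum u I)"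
      by (intro CollectI exI[of _ "\<lambda>i. 0"]) (simp add: sub subspace_0)
  next
    fix x y assume "x \<in> Collect (\<lambda>x. \<exists>u. (\<forall>i\<in>I. u i \<in> V i) \<and> x = sum u I)"
      "y \<in> Collect (\<lambda>x. \<exists>u. (\<forall>i\<in>I. u i \<in> V i) \<and> x = sum u I)"
    then obtain u v where "\<forall>i\<in>I. u i \<in> V i" "x = sum u I" "\<forall>i\<in>I. v i \<in> V i" "y = sum v I" by auto
    then show "x + y \<in> Collect (\<lambda>x. \<exists>u. (\<forall>i\<in>I. u i \<in> V i) \<and> x = sum u I)"
      by (intro CollectI exI[of _ "\<lambda>i. u i + v i"]) (simp add: sum.distrib sub subspace_add)
  next
    fix c x assume "x \<in> Collect (\<lambda>x. \<exists>u. (\<forall>i\<in>I. u i \<in> V i) \<and> x = sum u I)"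
    then obtain u where "\<forall>i\<in>I. u i \<in> V i" "x = sum u I" by auto
    then show "c *\<^sub>R x \<in> Collect (\<lambda>x. \<exists>u. (\<forall>i\<in>I. u i \<in> V i) \<and> x = sum u I)"
      by (intro CollectI exI[of _ "\<lambda>i. c *\<^sub>R u i"]) (simp add: scaleR_sum_right sub subspace_scale)
  qed
next
  case (step x)
  then obtain j where j: "j \<in> I" "x \<in> V j" by blast
  show ?case
    by (intro exI[of _ "\<lambda>i. if i = j then x else 0"])
       (use j fin sub in \<open>auto simp: subspace_0\<close>)
qed

context strct begin

abbreviation "N \<equiv> {1..r+s}"
abbreviation "I0 \<equiv> {0..r+s}"

lemma s01: "s = 0 \<or> s = 1" using s_def by (cases "z = {0}") simp_all
lemma s1z: "s = 1 \<Longrightarrow> z \<noteq> {0}" using s_def by (cases "z = {0}") simp_all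
lemma s0z: "s = 0 \<Longrightarrow> z = {0}" using s_def by (cases "z = {0}") simp_all

lemma iN_cases: "i \<in> N \<Longrightarrow> i \<in> {1..r} \<or> (s = 1 \<and> i = r + 1)"
  using s01 by (cases "s = 0") auto

lemma Kc: "s = 1 \<Longrightarrow> K (r+1) = z" using centre_K by simp

lemma KN_sub: "i \<in> N \<Longrightarrow> subspace (K i)" "i \<in> N \<Longrightarrow> K i \<subseteq> k"
  using iN_cases[of i] Ki(1) Ki_k Kc z_props by auto

lemma KN_br: assumes "i \<in> N" "x \<in> K i" "y \<in> K i" shows "br x y \<in> K i"
proof -
  consider "i \<in> {1..r}" | "s = 1" "i = r + 1" using iN_cases[OF assms(1)] by blast
  then show ?thesis
  proof cases
    case 1
    then have "x \<in> d" using Ki(2) assms(2) by blast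
    then show ?thesis using Ki(3)[OF 1] assms(3) by blast
  next
    case 2
    then have "K i = z" using Kc by simp
    then have "br x y = 0" using z_props(2,3) assms(2,3) by blast
    then show ?thesis using \<open>K i = z\<close> z_props(1) by (simp add: subspace_0)
  qed
qed

lemma KN_br0:
  assumes "i \<in> N" "j \<in> N" "i \<noteq> j" "x \<in> K i" "y \<in> K j"
  shows "br x y = 0"
proof -
  consider "i \<in> {1..r}" "j \<in> {1..r}" | "s = 1" "i = r + 1" | "s = 1" "j = r + 1"
    using iN_cases[OF assms(1)] iN_cases[OF assms(2)] by blast
  then show ?thesis
  proof cases
    case 1 then show ?thesis using K_br0 assms by blast
  next
    case 2 then show ?thesis using Kc z_props(3) assms KN_sub by blast
  next
    case 3
    then have "br y x = 0" using Kc z_props(3) assms KN_sub by blast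
    then show ?thesis using br_anti[OF lie, of x y] by simp
  qed
qed

lemma KN_B0:
  assumes "i \<in> N" "j \<in> N" "i \<noteq> j" "x \<in> K i" "y \<in> K j"
  shows "B x y = 0"
proof -
  consider "i \<in> {1..r}" "j \<in> {1..r}" | "s = 1" "i = r + 1" "j \<in> {1..r}" | "s = 1" "j = r + 1" "i \<in> {1..r}"
    using iN_cases[OF assms(1)] iN_cases[OF assms(2)] assms(3) by blast
  then show ?thesis
  proof cases
    case 1 then show ?thesis using K_B0 assms by blast
  next
    case 2 then show ?thesis using Kc B_z_d Ki(2) assms by blast
  next
    case 3
    then have "y \<in> z" "x \<in> d" using Kc Ki(2) assms(4,5) by auto
    then show ?thesis using B_z_d Bsym by metis
  qed
qed

lemma k_span: "k \<subseteq> span (\<Union>i\<in>N. K i)"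
proof
  fix x assume x: "x \<in> k"
  obtain a c where ac: "a \<in> d" "c \<in> z" "x = a + c" using k_dz[OF x] by blast
  have "(\<Union>i\<in>{1..r}. K i) \<subseteq> (\<Union>i\<in>N. K i)" by (intro UN_mono) auto
  then have "J \<subseteq> span (\<Union>i\<in>N. K i)" by (rule span_mono)
  then have "a \<in> span (\<Union>i\<in>N. K i)" using d_J ac(1) by blast
  moreover have "c \<in> span (\<Union>i\<in>N. K i)"
  proof (cases "s = 0")
    case True then show ?thesis using s0z ac(2) by (simp add: span_zero)
  next
    case False
    then have "s = 1" using s01 by simp
    then have "c \<in> (\<Union>i\<in>N. K i)" using Kc ac(2) by (intro UN_I[of "r+1"]) auto
    then show ?thesis by (rule span_base)
  qed
  ultimately show "x \<in> span (\<Union>i\<in>N. K i)" using ac(3) by (simp add: span_add)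
qed

definition K' :: "nat \<Rightarrow> 'a set" where "K' i = (if i = 0 then p else K i)"

lemma K'_sub: "i \<in> I0 \<Longrightarrow> subspace (K' i)"
  unfolding K'_def using psub KN_sub by auto

lemma K'_k: "i \<in> N \<Longrightarrow> K' i = K i" unfolding K'_def by auto
lemma K'_0: "K' 0 = p" unfolding K'_def by auto

lemma K'_orth:
  assumes "i \<in> I0" "j \<in> I0" "i \<noteq> j" "x \<in> K' i" "y \<in> K' j"
  shows "Q x y = 0"
proof -
  consider "i = 0" "j \<in> N" | "j = 0" "i \<in> N" | "i \<in> N" "j \<in> N" using assms by force
  then show ?thesis
  proof cases
    case 1
    then have "x \<in> p" "y \<in> k" using assms(4,5) KN_sub(2)[of j] unfolding K'_def by auto
    then show ?thesis using Q_pk by blast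
  next
    case 2
    then have "y \<in> p" "x \<in> k" using assms(4,5) KN_sub(2)[of i] unfolding K'_def by auto
    then show ?thesis using Q_kp by blast
  next
    case 3
    then have "x \<in> K i" "y \<in> K j" "i \<noteq> 0" "j \<noteq> 0" using assms(4,5) unfolding K'_def by auto
    moreover have "x \<in> k" "y \<in> k" using KN_sub(2)[OF 3(1)] KN_sub(2)[OF 3(2)] calculation by blast+
    ultimately show ?thesis using Q_kk KN_B0[OF 3 assms(3)] by simp
  qed
qed

lemma K'_decomp: "\<exists>u. (\<forall>i\<in>I0. u i \<in> K' i) \<and> x = (\<Sum>i\<in>I0. u i)"
proof -
  obtain a v where av: "a \<in> k" "v \<in> p" "x = a + v" using decomp by blast
  have "a \<in> span (\<Union>i\<in>N. K i)" using k_span av(1) by blast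
  then obtain u where u: "\<forall>i\<in>N. u i \<in> K i" "a = (\<Sum>i\<in>N. u i)"
    using span_sum_subspaces[of N K a] KN_sub(1) by blast
  define u' where "u' i = (if i = 0 then v else u i)" for i
  have "(\<Sum>i\<in>I0. u' i) = u' 0 + (\<Sum>i\<in>N. u' i)"
    by (simp add: sum.atLeast_Suc_atMost)
  also have "(\<Sum>i\<in>N. u' i) = (\<Sum>i\<in>N. u i)" unfolding u'_def by (intro sum.cong) auto
  also have "u' 0 = v" unfolding u'_def by simp
  finally have xs: "x = (\<Sum>i\<in>I0. u' i)" using av(3) u(2) by (simp add: add.commute)
  have "u' i \<in> K' i" if "i \<in> I0" for i
  proof (cases "i = 0")
    case True then show ?thesis using av(2) unfolding u'_def K'_def by simp
  next
    case False
    then have "i \<in> N" using that by auto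
    then show ?thesis using u(1) False unfolding u'_def K'_def by simp
  qed
  then show ?thesis using xs by blast
qed

definition FF :: "nat \<Rightarrow> 'a set" where
  "FF i = (SOME E. onb Q (K' i) E \<and> card E = dim (K' i))"

lemma FF: assumes "i \<in> I0" shows "onb Q (K' i) (FF i)" "card (FF i) = dim (K' i)"
proof -
  have "\<exists>E. onb Q (K' i) E \<and> card E = dim (K' i)"
    using onb_exists[OF Qbil Qsym _ K'_sub[OF assms]] Qpos by blast
  then have "onb Q (K' i) (FF i) \<and> card (FF i) = dim (K' i)" unfolding FF_def by (rule someI_ex)
  then show "onb Q (K' i) (FF i)" "card (FF i) = dim (K' i)" by auto
qed

lemma FF_fin: "i \<in> I0 \<Longrightarrow> finite (FF i)" using FF(1) unfolding onb_def by auto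
lemma FF_sub: "i \<in> I0 \<Longrightarrow> FF i \<subseteq> K' i" using FF(1) unfolding onb_def by auto
lemma FF_on: "i \<in> I0 \<Longrightarrow> a \<in> FF i \<Longrightarrow> b \<in> FF i \<Longrightarrow> Q a b = (if a = b then 1 else 0)"
  using FF(1) unfolding onb_def by auto
lemma FF_comp: "i \<in> I0 \<Longrightarrow> x \<in> K' i \<Longrightarrow> x = (\<Sum>e\<in>FF i. Q x e *\<^sub>R e)"
  using FF(1) unfolding onb_def by auto

lemma Q_FF_other: "i \<in> I0 \<Longrightarrow> j \<in> I0 \<Longrightarrow> i \<noteq> j \<Longrightarrow> x \<in> K' j \<Longrightarrow> f \<in> FF i \<Longrightarrow> Q x f = 0"
  using K'_orth FF_sub by blast

lemma Q_complete: "x = (\<Sum>i\<in>I0. \<Sum>f\<in>FF i. Q x f *\<^sub>R f)"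
proof -
  obtain u where u: "\<forall>i\<in>I0. u i \<in> K' i" "x = (\<Sum>i\<in>I0. u i)" using K'_decomp by blast
  have Qx: "Q x f = Q (u i) f" if i: "i \<in> I0" and f: "f \<in> FF i" for i f
  proof -
    have "Q x f = (\<Sum>j\<in>I0. Q (u j) f)" using u(2) by (simp add: bil_suml[OF Qbil])
    also have "\<dots> = Q (u i) f + (\<Sum>j\<in>I0 - {i}. Q (u j) f)" using i by (simp add: sum.remove)
    also have "(\<Sum>j\<in>I0 - {i}. Q (u j) f) = 0"
    proof (intro sum.neutral ballI)
      fix j assume "j \<in> I0 - {i}"
      then show "Q (u j) f = 0" using Q_FF_other[OF i, of j "u j" f] u(1) f by auto
    qed
    finally show ?thesis by simp
  qed
  have e: "u i = (\<Sum>f\<in>FF i. Q (u i) f *\<^sub>R f)" if "i \<in> I0" for i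
    using FF_comp that u(1) by blast
  have "x = (\<Sum>i\<in>I0. u i)" by (rule u(2))
  also have "\<dots> = (\<Sum>i\<in>I0. \<Sum>f\<in>FF i. Q (u i) f *\<^sub>R f)" by (rule sum.cong[OF refl e])
  finally have "x = (\<Sum>i\<in>I0. \<Sum>f\<in>FF i. Q (u i) f *\<^sub>R f)" .
  also have "\<dots> = (\<Sum>i\<in>I0. \<Sum>f\<in>FF i. Q x f *\<^sub>R f)" using Qx by simp
  finally show ?thesis .
qed

lemma FF_orth_all: "i \<in> I0 \<Longrightarrow> j \<in> I0 \<Longrightarrow> a \<in> FF i \<Longrightarrow> b \<in> FF j \<Longrightarrow>
   Q a b = (if i = j \<and> a = b then 1 else 0)"
proof -
  assume h: "i \<in> I0" "j \<in> I0" "a \<in> FF i" "b \<in> FF j"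
  show ?thesis
  proof (cases "i = j")
    case True then show ?thesis using FF_on h by simp
  next
    case False
    have "a \<in> K' i" using FF_sub h by blast
    then have "Q a b = 0" using Q_FF_other[OF h(2,1) _ _ h(4)] False by auto
    then show ?thesis using False by simp
  qed
qed

lemma fproj_onb:
  assumes V: "subspace V" and E: "onb Q V E"
  shows "fproj Q V x = (\<Sum>e\<in>E. Q x e *\<^sub>R e)"
  unfolding fproj_def
proof (rule the_equality)
  let ?w = "\<Sum>e\<in>E. Q x e *\<^sub>R e"
  have wV: "?w \<in> V" using E V unfolding onb_def by (auto intro!: subspace_sum subspace_scale)
  have "Q (x - ?w) y = 0" if y: "y \<in> V" for y
  proof -
    have "Q (x - ?w) y = Q x y - Q ?w y" by (simp add: bilinear_lsub[OF Qbil])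
    also have "Q ?w y = (\<Sum>e\<in>E. Q x e * Q e y)"
      by (simp add: bil_suml[OF Qbil] bilinear_lmul[OF Qbil])
    also have "\<dots> = (\<Sum>e\<in>E. Q y e * Q x e)" using Qsym by (simp add: mult.commute)
    also have "\<dots> = Q x (\<Sum>e\<in>E. Q y e *\<^sub>R e)"
      by (simp add: bil_sumr[OF Qbil] bilinear_rmul[OF Qbil])
    also have "(\<Sum>e\<in>E. Q y e *\<^sub>R e) = y" using E y unfolding onb_def by auto
    finally show ?thesis by simp
  qed
  then show "?w \<in> V \<and> (\<forall>w\<in>V. Q (x - ?w) w = 0)" using wV by blast
  fix u assume h: "u \<in> V \<and> (\<forall>w\<in>V. Q (x - u) w = 0)"
  have d: "?w - u \<in> V" using h wV V by (simp add: subspace_diff)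
  have "Q (?w - u) (?w - u) = Q (x - u) (?w - u) - Q (x - ?w) (?w - u)"
    by (simp add: bilinear_lsub[OF Qbil])
  also have "\<dots> = 0" using h d \<open>\<And>y. y \<in> V \<Longrightarrow> Q (x - ?w) y = 0\<close> by simp
  finally have "?w - u = 0" using Qpos by (metis less_irrefl)
  then show "u = ?w" by simp
qed

lemma restr_FF: assumes "i \<in> I0"
  shows "restr_form Q (K' i) x y = (\<Sum>f\<in>FF i. Q x f * Q y f)"
proof -
  have "restr_form Q (K' i) x y = Q (\<Sum>e\<in>FF i. Q x e *\<^sub>R e) (\<Sum>e\<in>FF i. Q y e *\<^sub>R e)"
    unfolding restr_form_def using fproj_onb[OF K'_sub[OF assms] FF(1)[OF assms]] by simp
  also have "\<dots> = (\<Sum>e\<in>FF i. Q y e * Q (\<Sum>e\<in>FF i. Q x e *\<^sub>R e) e)"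
    by (simp add: bil_sumr[OF Qbil] bilinear_rmul[OF Qbil])
  also have "\<dots> = (\<Sum>e\<in>FF i. Q x e * Q y e)"
  proof (intro sum.cong refl)
    fix e assume e: "e \<in> FF i"
    have o: "orthn Q (FF i)" unfolding orthn_def using FF_on[OF assms] by blast
    show "Q y e * Q (\<Sum>e\<in>FF i. Q x e *\<^sub>R e) e = Q x e * Q y e"
      using orthn_sum_coeff[OF Qbil o FF_fin[OF assms] e] by simp
  qed
  finally show ?thesis .
qed

end




lemma trace_lin_nested:
  fixes T :: "'a::euclidean_space \<Rightarrow> 'a"
  assumes fin: "finite I" "\<And>i. i \<in> I \<Longrightarrow> finite (F i)"
    and cE: "\<And>x. x = (\<Sum>i\<in>I. \<Sum>f\<in>F i. c i f x *\<^sub>R f)"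
    and lc: "\<And>i f. linear (c i f)"
    and T: "linear T"
  shows "trace_lin T = (\<Sum>i\<in>I. \<Sum>f\<in>F i. c i f (T f))"
proof -
  have "(\<Sum>i\<in>I. \<Sum>f\<in>F i. c i f (T f)) = (\<Sum>i\<in>I. \<Sum>f\<in>F i. c i f (T (\<Sum>b\<in>Basis. inner f b *\<^sub>R b)))"
    by (simp add: euclidean_representation)
  also have "\<dots> = (\<Sum>i\<in>I. \<Sum>f\<in>F i. \<Sum>b\<in>Basis. inner f b * c i f (T b))"
  proof (intro sum.cong refl)
    fix i f
    interpret l: linear "c i f" by (rule lc)
    interpret t: linear T by (rule T)
    show "c i f (T (\<Sum>b\<in>Basis. inner f b *\<^sub>R b)) = (\<Sum>b\<in>Basis. inner f b * c i f (T b))"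
      by (simp add: l.sum t.sum l.scale t.scale)
  qed
  also have "\<dots> = (\<Sum>i\<in>I. \<Sum>b\<in>Basis. \<Sum>f\<in>F i. inner f b * c i f (T b))"
    by (rule sum.cong[OF refl], rule sum.swap)
  also have "\<dots> = (\<Sum>b\<in>Basis. \<Sum>i\<in>I. \<Sum>f\<in>F i. inner f b * c i f (T b))"
    by (rule sum.swap)
  also have "\<dots> = (\<Sum>b\<in>(Basis::'a set). inner (\<Sum>i\<in>I. \<Sum>f\<in>F i. c i f (T b) *\<^sub>R f) b)"
    by (simp add: inner_sum_left mult.commute)
  also have "\<dots> = (\<Sum>b\<in>Basis. inner (T b) b)"
  proof (intro sum.cong refl)
    fix b :: 'a
    have "(\<Sum>i\<in>I. \<Sum>f\<in>F i. c i f (T b) *\<^sub>R f) = T b" by (rule cE[symmetric])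
    then show "inner (\<Sum>i\<in>I. \<Sum>f\<in>F i. c i f (T b) *\<^sub>R f) b = inner (T b) b" by simp
  qed
  finally show ?thesis unfolding trace_lin_def by simp
qed

locale full = strct br k K r s for br :: "'a::euclidean_space \<Rightarrow> 'a \<Rightarrow> 'a" and k K r s +
  fixes kappa alpha :: "nat \<Rightarrow> real" and beta :: real
  assumes simple: "simple_sub br UNIV"
    and kappa: "\<forall>i\<in>{1..r+s}. \<forall>x\<in>K i. \<forall>y\<in>K i. killing_on br (K i) x y = kappa i * killing br x y"
    and beta_pos: "beta > 0"
    and alpha_pos: "\<forall>i\<in>{1..r+s}. alpha i > 0"
begin

definition al :: "nat \<Rightarrow> real" where "al i = (if i = 0 then beta else alpha i)"
lemma al_pos: "i \<in> I0 \<Longrightarrow> al i > 0" unfolding al_def using beta_pos alpha_pos by auto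

definition gm :: "'a \<Rightarrow> 'a \<Rightarrow> real" where
  "gm x y = beta * restr_form Q p x y + (\<Sum>i=1..r+s. alpha i * restr_form Q (K i) x y)"

lemma gm_eq: "gm x y = (\<Sum>i\<in>I0. al i * (\<Sum>f\<in>FF i. Q x f * Q y f))"
proof -
  have "(\<Sum>i\<in>I0. al i * (\<Sum>f\<in>FF i. Q x f * Q y f)) =
     al 0 * (\<Sum>f\<in>FF 0. Q x f * Q y f) + (\<Sum>i\<in>N. al i * (\<Sum>f\<in>FF i. Q x f * Q y f))"
    by (simp add: sum.atLeast_Suc_atMost)
  also have "al 0 * (\<Sum>f\<in>FF 0. Q x f * Q y f) = beta * restr_form Q p x y"
    using restr_FF[of 0 x y] unfolding al_def K'_def by simp
  also have "(\<Sum>i\<in>N. al i * (\<Sum>f\<in>FF i. Q x f * Q y f)) = (\<Sum>i\<in>N. alpha i * restr_form Q (K i) x y)"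
  proof (intro sum.cong refl)
    fix i assume i: "i \<in> N"
    then have "i \<in> I0" "i \<noteq> 0" by auto
    then show "al i * (\<Sum>f\<in>FF i. Q x f * Q y f) = alpha i * restr_form Q (K i) x y"
      using restr_FF[of i x y] by (simp add: al_def K'_def)
  qed
  finally show ?thesis unfolding gm_def by simp
qed

lemma Qfl: "linear (\<lambda>x. Q x f)" using Qbil unfolding bilinear_def by simp

lemma gm_sym: "gm x y = gm y x" unfolding gm_eq by (simp add: mult.commute)

lemma gm_bil: "bilinear gm"
proof -
  have l: "linear (\<lambda>x. gm x y)" for y
  proof (rule linearI)
    fix a b
    show "gm (a + b) y = gm a y + gm b y" unfolding gm_eq
      by (simp add: bilinear_ladd[OF Qbil] distrib_right sum.distrib distrib_left)
  next
    fix c a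
    show "gm (c *\<^sub>R a) y = c *\<^sub>R gm a y" unfolding gm_eq
      by (simp add: bilinear_lmul[OF Qbil] sum_distrib_left mult.assoc mult.left_commute)
  qed
  have r: "linear (\<lambda>y. gm x y)" for x
  proof -
    have "(\<lambda>y. gm x y) = (\<lambda>y. gm y x)" by (rule ext) (rule gm_sym)
    then show ?thesis using l[of x] by simp
  qed
  show ?thesis unfolding bilinear_def using l r by blast
qed

lemma gm_sq: "gm x x = (\<Sum>i\<in>I0. al i * (\<Sum>f\<in>FF i. (Q x f)^2))"
  unfolding gm_eq by (simp add: power2_eq_square)

lemma gm_pos: "x \<noteq> 0 \<Longrightarrow> gm x x > 0"
proof -
  assume x: "x \<noteq> 0"
  have nn: "\<forall>i\<in>I0. al i * (\<Sum>f\<in>FF i. (Q x f)^2) \<ge> 0"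
  proof
    fix i assume "i \<in> I0"
    then show "al i * (\<Sum>f\<in>FF i. (Q x f)^2) \<ge> 0" using al_pos[of i] by (intro mult_nonneg_nonneg sum_nonneg) auto
  qed
  have "\<exists>i\<in>I0. \<exists>f\<in>FF i. Q x f \<noteq> 0"
  proof (rule ccontr)
    assume "\<not> ?thesis"
    then have "(\<Sum>i\<in>I0. \<Sum>f\<in>FF i. Q x f *\<^sub>R f) = 0" by simp
    then show False using Q_complete[of x] x by simp
  qed
  then obtain i f where i: "i \<in> I0" "f \<in> FF i" "Q x f \<noteq> 0" by blast
  have "(\<Sum>f\<in>FF i. (Q x f)^2) \<ge> (Q x f)^2"
    using i FF_fin[of i] by (intro member_le_sum) auto
  then have "(\<Sum>f\<in>FF i. (Q x f)^2) > 0" using i(3) by (smt (verit) zero_less_power2)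
  then have "al i * (\<Sum>f\<in>FF i. (Q x f)^2) > 0" using al_pos[OF i(1)] by simp
  then have "(\<Sum>i\<in>I0. al i * (\<Sum>f\<in>FF i. (Q x f)^2)) > 0"
    using i(1) nn by (intro sum_pos2[where i=i]) auto
  then show ?thesis unfolding gm_sq .
qed

lemma gm_FF: assumes i: "i \<in> I0" and f: "f \<in> FF i" shows "gm x f = al i * Q x f"
proof -
  have inner: "(\<Sum>h\<in>FF j. Q x h * Q f h) = (if j = i then Q x f else 0)" if j: "j \<in> I0" for j
  proof (cases "j = i")
    case True
    have "(\<Sum>h\<in>FF j. Q x h * Q f h) = (\<Sum>h\<in>FF j. if h = f then Q x h else 0)"
      by (intro sum.cong refl) (simp add: FF_orth_all[OF i j f] True)
    also have "\<dots> = Q x f" using f FF_fin[OF i] True by simp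
    finally show ?thesis using True by simp
  next
    case False
    have "(\<Sum>h\<in>FF j. Q x h * Q f h) = (\<Sum>h\<in>FF j. 0)"
      using False by (intro sum.cong refl) (auto simp: FF_orth_all[OF i j f])
    then show ?thesis using False by simp
  qed
  have "gm x f = (\<Sum>j\<in>I0. al j * (if j = i then Q x f else 0))"
    unfolding gm_eq by (intro sum.cong refl) (simp add: inner)
  also have "\<dots> = (\<Sum>j\<in>I0. if j = i then al i * Q x f else 0)"
    by (intro sum.cong refl) simp
  also have "\<dots> = al i * Q x f" using i by simp
  finally show ?thesis .
qed

end




context full begin

lemma FF0p: "f \<in> FF 0 \<Longrightarrow> f \<in> p" using FF_sub[of 0] K'_0 by auto
lemma FFK: "i \<in> N \<Longrightarrow> f \<in> FF i \<Longrightarrow> f \<in> K i" using FF_sub[of i] K'_k[of i] by auto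
lemma FFk: "i \<in> N \<Longrightarrow> f \<in> FF i \<Longrightarrow> f \<in> k" using FFK KN_sub(2) by blast
lemma N_I0: "i \<in> N \<Longrightarrow> i \<in> I0" by auto

lemma trace_full: "linear T \<Longrightarrow> trace_lin T = (\<Sum>i\<in>I0. \<Sum>f\<in>FF i. Q (T f) f)"
  by (rule trace_lin_nested[where c="\<lambda>i f x. Q x f"]) (auto simp: FF_fin Qfl intro: Q_complete)

lemma parseval: assumes m: "m \<in> I0" and w: "w \<in> K' m" shows "Q w w = (\<Sum>h\<in>FF m. (Q w h)^2)"
proof -
  have "Q w w = Q w (\<Sum>h\<in>FF m. Q w h *\<^sub>R h)" using FF_comp[OF m w] by simp
  then show ?thesis by (simp add: bil_sumr[OF Qbil] bilinear_rmul[OF Qbil] power2_eq_square)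
qed

lemma gm_Km: assumes m: "m \<in> I0" and w: "w \<in> K' m" shows "gm w w = al m * Q w w"
proof -
  have "gm w w = (\<Sum>l\<in>I0. if l = m then al m * (\<Sum>h\<in>FF m. (Q w h)^2) else 0)"
    unfolding gm_sq
  proof (intro sum.cong refl)
    fix l assume l: "l \<in> I0"
    show "al l * (\<Sum>h\<in>FF l. (Q w h)^2) = (if l = m then al m * (\<Sum>h\<in>FF m. (Q w h)^2) else 0)"
    proof (cases "l = m")
      case False
      have "(\<Sum>h\<in>FF l. (Q w h)^2) = 0" using Q_FF_other[OF l m False w] by simp
      then show ?thesis using False by simp
    qed simp
  qed
  also have "\<dots> = al m * (\<Sum>h\<in>FF m. (Q w h)^2)" using m by simp
  finally show ?thesis using parseval[OF m w] by simp
qed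

lemma gm_k: assumes w: "w \<in> k" shows "gm w w = (\<Sum>l\<in>N. alpha l * (\<Sum>h\<in>FF l. (Q w h)^2))"
proof -
  have "gm w w = al 0 * (\<Sum>h\<in>FF 0. (Q w h)^2) + (\<Sum>l\<in>N. al l * (\<Sum>h\<in>FF l. (Q w h)^2))"
    unfolding gm_sq by (simp add: sum.atLeast_Suc_atMost)
  also have "(\<Sum>h\<in>FF 0. (Q w h)^2) = 0" using Q_kp[OF w] FF0p by simp
  also have "(\<Sum>l\<in>N. al l * (\<Sum>h\<in>FF l. (Q w h)^2)) = (\<Sum>l\<in>N. alpha l * (\<Sum>h\<in>FF l. (Q w h)^2))"
    by (intro sum.cong refl) (auto simp: al_def)
  finally show ?thesis by simp
qed

lemma tr_K: assumes l: "l \<in> N" and x: "x \<in> K l"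
  shows "(\<Sum>f\<in>FF l. Q (br x (br x f)) f) = kappa l * B x x"
proof -
  have "killing_on br (K l) x x = trace_on (K l) (\<lambda>z. br x (br x z))" unfolding killing_on_def ..
  also have "\<dots> = (\<Sum>f\<in>FF l. Q (br x (br x f)) f)"
  proof (rule trace_on_dual[where c="\<lambda>e y. Q y e"])
    show "subspace (K l)" using KN_sub(1)[OF l] .
    show "finite (FF l)" using FF_fin[OF N_I0[OF l]] .
    show "FF l \<subseteq> K l" using FFK[OF l] by blast
    show "y = (\<Sum>e\<in>FF l. Q y e *\<^sub>R e)" if "y \<in> K l" for y
      using FF_comp[OF N_I0[OF l]] K'_k[OF l] that by simp
    show "linon (K l) (\<lambda>y. Q y e)" for e by (rule linon_linear[OF Qfl])
    show "linear (\<lambda>z. br x (br x z))" by (rule lin_brbr[OF lie])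
    show "br x (br x y) \<in> K l" if "y \<in> K l" for y using KN_br[OF l x] that by blast
  qed
  finally show ?thesis using kappa l x by simp
qed

lemma ad_p: assumes l: "l \<in> N" and x: "x \<in> K l"
  shows "(\<Sum>y\<in>FF 0. B (br x y) (br x y)) = - (1 - kappa l) * B x x"
proof -
  have xk: "x \<in> k" using x KN_sub(2)[OF l] by blast
  have "B x x = (\<Sum>i\<in>I0. \<Sum>f\<in>FF i. Q (br x (br x f)) f)"
    unfolding killing_def by (rule trace_full[OF lin_brbr[OF lie]])
  also have "\<dots> = (\<Sum>f\<in>FF 0. Q (br x (br x f)) f) + (\<Sum>i\<in>N. \<Sum>f\<in>FF i. Q (br x (br x f)) f)"
    by (simp add: sum.atLeast_Suc_atMost)
  also have "(\<Sum>f\<in>FF 0. Q (br x (br x f)) f) = - (\<Sum>y\<in>FF 0. B (br x y) (br x y))"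
  proof -
    have "Q (br x (br x f)) f = - B (br x f) (br x f)" if f: "f \<in> FF 0" for f
    proof -
      have fp: "f \<in> p" using FF0p f .
      have a: "br x f \<in> p" using kpbr[OF xk fp] .
      have "br x (br x f) \<in> p" using kpbr[OF xk a] .
      then have "Q (br x (br x f)) f = B (br x (br x f)) f" using Q_pp fp by blast
      also have "\<dots> = - B (br x f) (br x f)" using Binv[of x "br x f" f] Bsym[of "br x f" "br x (br x f)"] by simp
      finally show ?thesis .
    qed
    then show ?thesis by (simp add: sum_negf)
  qed
  also have "(\<Sum>i\<in>N. \<Sum>f\<in>FF i. Q (br x (br x f)) f) = kappa l * B x x"
  proof -
    have "(\<Sum>i\<in>N. \<Sum>f\<in>FF i. Q (br x (br x f)) f) = (\<Sum>f\<in>FF l. Q (br x (br x f)) f)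
         + (\<Sum>i\<in>N - {l}. \<Sum>f\<in>FF i. Q (br x (br x f)) f)"
      by (rule sum.remove) (use l in auto)
    also have "(\<Sum>i\<in>N - {l}. \<Sum>f\<in>FF i. Q (br x (br x f)) f) = 0"
    proof (rule sum.neutral, rule ballI)
      fix i assume i: "i \<in> N - {l}"
      have iN: "i \<in> N" and li: "l \<noteq> i" using i by auto
      have "br x f = 0" if hf: "f \<in> FF i" for f
        using KN_br0[OF l iN li x FFK[OF iN hf]] .
      then show "(\<Sum>f\<in>FF i. Q (br x (br x f)) f) = 0"
        by (simp add: br_0r[OF lie] bilinear_lzero[OF Qbil])
    qed
    finally show ?thesis using tr_K[OF l x] by simp
  qed
  finally have "B x x = - (\<Sum>y\<in>FF 0. B (br x y) (br x y)) + kappa l * B x x" .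
  then show ?thesis by (simp add: algebra_simps)
qed

lemma kappa_centre: assumes s1: "s = 1" shows "kappa (r+1) = 0"
proof -
  have l: "r + 1 \<in> N" using s1 by simp
  have "\<exists>x. x \<in> z \<and> x \<noteq> 0"
  proof (rule ccontr)
    assume "\<not> ?thesis"
    then have "z \<subseteq> {0}" by auto
    then have "z = {0}" using subspace_0[OF z_props(1)] by auto
    then show False using s1z[OF s1] by simp
  qed
  then obtain x where x: "x \<in> z" "x \<noteq> 0" by blast
  have xK: "x \<in> K (r+1)" using x Kc[OF s1] by simp
  have "(\<Sum>f\<in>FF (r+1). Q (br x (br x f)) f) = 0"
  proof (intro sum.neutral ballI)
    fix f assume "f \<in> FF (r+1)"
    then have "f \<in> k" using FFk[OF l] by blast
    then have "br x f = 0" using z_props(3) x by blast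
    then show "Q (br x (br x f)) f = 0" by (simp add: br_0r[OF lie] bilinear_lzero[OF Qbil])
  qed
  then have "kappa (r+1) * B x x = 0" using tr_K[OF l xK] by simp
  moreover have "B x x < 0" using kneg x z_props(2) by blast
  ultimately show ?thesis by simp
qed

end




context full begin

definition W :: "nat \<Rightarrow> nat \<Rightarrow> real" where
  "W i' i = (\<Sum>f'\<in>FF i'. \<Sum>f\<in>FF i. gm (br f' f) (br f' f))"

lemma card_FF_N: "i \<in> N \<Longrightarrow> card (FF i) = dim (K i)" using FF(2)[of i] K'_k[of i] by auto
lemma card_FF0: "card (FF 0) = dim p" using FF(2)[of 0] K'_0 by auto
lemma Q_unit: "i \<in> I0 \<Longrightarrow> f \<in> FF i \<Longrightarrow> Q f f = 1" using FF_on by simp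
lemma B_unit_p: "f \<in> FF 0 \<Longrightarrow> B f f = 1" using Q_pp[of f f] FF0p Q_unit[of 0 f] by simp
lemma B_unit_k: "i \<in> N \<Longrightarrow> f \<in> FF i \<Longrightarrow> B f f = -1"
  using Q_kk[of f f] FFk Q_unit[of i f] by auto

lemma W_ii: assumes i: "i \<in> N" shows "W i i = alpha i * real (dim (K i)) * kappa i"
proof -
  have inner: "(\<Sum>f\<in>FF i. gm (br f' f) (br f' f)) = alpha i * kappa i" if f': "f' \<in> FF i" for f'
  proof -
    have f'K: "f' \<in> K i" using FFK[OF i f'] .
    have f'k: "f' \<in> k" using FFk[OF i f'] .
    have t: "gm (br f' f) (br f' f) = - alpha i * Q (br f' (br f' f)) f" if f: "f \<in> FF i" for f
    proof -
      have fK: "f \<in> K i" using FFK[OF i f] .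
      have fk: "f \<in> k" using FFk[OF i f] .
      have wK: "br f' f \<in> K i" using KN_br[OF i f'K fK] .
      have wk: "br f' f \<in> k" using wK KN_sub(2)[OF i] by blast
      have vK: "br f' (br f' f) \<in> K i" using KN_br[OF i f'K wK] .
      have vk: "br f' (br f' f) \<in> k" using vK KN_sub(2)[OF i] by blast
      have "gm (br f' f) (br f' f) = al i * Q (br f' f) (br f' f)"
        using gm_Km[OF N_I0[OF i]] wK K'_k[OF i] by simp
      also have "al i = alpha i" using i by (simp add: al_def)
      also have "Q (br f' f) (br f' f) = - B (br f' f) (br f' f)" using Q_kk[OF wk wk] .
      also have "B (br f' f) (br f' f) = - B f (br f' (br f' f))" using Binv[of f' f "br f' f"] .
      also have "B f (br f' (br f' f)) = - Q f (br f' (br f' f))" using Q_kk[OF fk vk] by simp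
      also have "Q f (br f' (br f' f)) = Q (br f' (br f' f)) f" by (rule Qsym)
      finally show ?thesis by simp
    qed
    have "(\<Sum>f\<in>FF i. gm (br f' f) (br f' f)) = (\<Sum>f\<in>FF i. - alpha i * Q (br f' (br f' f)) f)"
      using t by (rule sum.cong[OF refl])
    also have "\<dots> = - alpha i * (\<Sum>f\<in>FF i. Q (br f' (br f' f)) f)" by (simp add: sum_distrib_left)
    also have "\<dots> = - alpha i * (kappa i * B f' f')" using tr_K[OF i f'K] by simp
    also have "B f' f' = -1" using B_unit_k[OF i f'] .
    finally show ?thesis by simp
  qed
  have "W i i = (\<Sum>f'\<in>FF i. alpha i * kappa i)" unfolding W_def using inner by (rule sum.cong[OF refl])
  also have "\<dots> = alpha i * real (dim (K i)) * kappa i" using card_FF_N[OF i] by simp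
  finally show ?thesis .
qed

lemma W_ij: assumes i: "i \<in> N" and j: "j \<in> N" and ij: "i \<noteq> j" shows "W i j = 0"
proof -
  have "gm (br f' f) (br f' f) = 0" if "f' \<in> FF i" "f \<in> FF j" for f' f
    using KN_br0[OF i j ij FFK[OF i that(1)] FFK[OF j that(2)]] by (simp add: bilinear_lzero[OF gm_bil])
  then show ?thesis unfolding W_def by simp
qed

lemma p_br: assumes "f \<in> k" "y \<in> p" shows "br y f \<in> p" "br f y \<in> p"
proof -
  show "br f y \<in> p" using kpbr assms by blast
  then show "br y f \<in> p" using br_anti[OF lie, of y f] psub by (simp add: subspace_neg)
qed

lemma sum_ad_p: assumes i: "i \<in> N"
  shows "(\<Sum>f\<in>FF i. \<Sum>y\<in>FF 0. B (br f y) (br f y)) = real (dim (K i)) * (1 - kappa i)"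
proof -
  have "(\<Sum>f\<in>FF i. \<Sum>y\<in>FF 0. B (br f y) (br f y)) = (\<Sum>f\<in>FF i. 1 - kappa i)"
  proof (rule sum.cong[OF refl])
    fix f assume f: "f \<in> FF i"
    show "(\<Sum>y\<in>FF 0. B (br f y) (br f y)) = 1 - kappa i"
      using ad_p[OF i FFK[OF i f]] B_unit_k[OF i f] by simp
  qed
  then show ?thesis using card_FF_N[OF i] by simp
qed

lemma W_i0: assumes i: "i \<in> N" shows "W i 0 = beta * real (dim (K i)) * (1 - kappa i)"
proof -
  have "W i 0 = (\<Sum>f\<in>FF i. \<Sum>y\<in>FF 0. beta * B (br f y) (br f y))"
    unfolding W_def
  proof (intro sum.cong refl)
    fix f y assume f: "f \<in> FF i" and y: "y \<in> FF 0"
    have w: "br f y \<in> p" using p_br(2)[OF FFk[OF i f] FF0p[OF y]] .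
    have "gm (br f y) (br f y) = al 0 * Q (br f y) (br f y)"
      using gm_Km[of 0] w K'_0 by simp
    then show "gm (br f y) (br f y) = beta * B (br f y) (br f y)" using Q_pp[OF w w] by (simp add: al_def)
  qed
  also have "\<dots> = beta * (\<Sum>f\<in>FF i. \<Sum>y\<in>FF 0. B (br f y) (br f y))" by (simp add: sum_distrib_left)
  finally show ?thesis using sum_ad_p[OF i] by simp
qed

lemma W_0i: assumes i: "i \<in> N" shows "W 0 i = beta * real (dim (K i)) * (1 - kappa i)"
proof -
  have "W 0 i = (\<Sum>y\<in>FF 0. \<Sum>f\<in>FF i. beta * B (br f y) (br f y))"
    unfolding W_def
  proof (intro sum.cong refl)
    fix f y assume f: "f \<in> FF i" and y: "y \<in> FF 0"
    have w: "br y f \<in> p" using p_br(1)[OF FFk[OF i f] FF0p[OF y]] .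
    have "gm (br y f) (br y f) = al 0 * Q (br y f) (br y f)"
      using gm_Km[of 0] w K'_0 by simp
    also have "br y f = - br f y" by (rule br_anti[OF lie])
    finally show "gm (br y f) (br y f) = beta * B (br f y) (br f y)"
      using Q_pp[OF w w] \<open>br y f = - br f y\<close>
      by (simp add: al_def bilinear_lneg[OF Bbil] bilinear_rneg[OF Bbil])
  qed
  also have "\<dots> = (\<Sum>f\<in>FF i. \<Sum>y\<in>FF 0. beta * B (br f y) (br f y))" by (rule sum.swap)
  also have "\<dots> = beta * (\<Sum>f\<in>FF i. \<Sum>y\<in>FF 0. B (br f y) (br f y))" by (simp add: sum_distrib_left)
  finally show ?thesis using sum_ad_p[OF i] by simp
qed

end




lemma swap_nest:
  fixes X :: "'x \<Rightarrow> 'l \<Rightarrow> 'h \<Rightarrow> real"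
  shows "(\<Sum>a\<in>A. \<Sum>l\<in>L. c l * (\<Sum>h\<in>H l. X a l h)) = (\<Sum>l\<in>L. c l * (\<Sum>h\<in>H l. \<Sum>a\<in>A. X a l h))"
proof -
  have "(\<Sum>a\<in>A. \<Sum>l\<in>L. c l * (\<Sum>h\<in>H l. X a l h)) = (\<Sum>a\<in>A. \<Sum>l\<in>L. \<Sum>h\<in>H l. c l * X a l h)"
    by (simp add: sum_distrib_left)
  also have "\<dots> = (\<Sum>l\<in>L. \<Sum>a\<in>A. \<Sum>h\<in>H l. c l * X a l h)" by (rule sum.swap)
  also have "\<dots> = (\<Sum>l\<in>L. \<Sum>h\<in>H l. \<Sum>a\<in>A. c l * X a l h)" by (rule sum.cong[OF refl], rule sum.swap)
  also have "\<dots> = (\<Sum>l\<in>L. c l * (\<Sum>h\<in>H l. \<Sum>a\<in>A. X a l h))" by (simp add: sum_distrib_left)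
  finally show ?thesis .
qed

context full begin

lemma W_00: "W 0 0 = (\<Sum>l\<in>N. alpha l * (real (dim (K l)) * (1 - kappa l)))"
proof -
  have key: "Q (br y z) h = Q (br y h) z" if y: "y \<in> FF 0" and z: "z \<in> FF 0" and l: "l \<in> N" and h: "h \<in> FF l"
    for y z l h
  proof -
    have yp: "y \<in> p" using FF0p[OF y] . have zp: "z \<in> p" using FF0p[OF z] .
    have hk: "h \<in> k" using FFk[OF l h] .
    have w: "br y z \<in> k" using ppbr[OF yp zp] .
    have u: "br y h \<in> p" using p_br(1)[OF hk yp] .
    have "Q (br y z) h = - B (br y z) h" using Q_kk[OF w hk] .
    also have "B (br y z) h = B h (br y z)" by (rule Bsym)
    also have "B h (br y z) = - B (br y h) z" using Binv[of y h z] by simp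
    also have "B (br y h) z = Q (br y h) z" using Q_pp[OF u zp] by simp
    finally show ?thesis by simp
  qed
  have inner: "(\<Sum>z\<in>FF 0. gm (br y z) (br y z)) = (\<Sum>l\<in>N. alpha l * (\<Sum>h\<in>FF l. B (br h y) (br h y)))"
    if y: "y \<in> FF 0" for y
  proof -
    have "(\<Sum>z\<in>FF 0. gm (br y z) (br y z)) = (\<Sum>z\<in>FF 0. \<Sum>l\<in>N. alpha l * (\<Sum>h\<in>FF l. (Q (br y h) z)^2))"
    proof (rule sum.cong[OF refl])
      fix z assume z: "z \<in> FF 0"
      have w: "br y z \<in> k" using ppbr[OF FF0p[OF y] FF0p[OF z]] .
      show "gm (br y z) (br y z) = (\<Sum>l\<in>N. alpha l * (\<Sum>h\<in>FF l. (Q (br y h) z)^2))"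
        unfolding gm_k[OF w] using key[OF y z] by simp
    qed
    also have "\<dots> = (\<Sum>l\<in>N. alpha l * (\<Sum>h\<in>FF l. \<Sum>z\<in>FF 0. (Q (br y h) z)^2))" by (rule swap_nest)
    also have "\<dots> = (\<Sum>l\<in>N. alpha l * (\<Sum>h\<in>FF l. B (br h y) (br h y)))"
    proof (intro sum.cong refl arg_cong2[where f="(*)"])
      fix l h assume l: "l \<in> N" and h: "h \<in> FF l"
      have u: "br y h \<in> p" using p_br(1)[OF FFk[OF l h] FF0p[OF y]] .
      have "(\<Sum>z\<in>FF 0. (Q (br y h) z)^2) = Q (br y h) (br y h)"
        using parseval[of 0 "br y h"] u K'_0 by simp
      also have "\<dots> = B (br y h) (br y h)" using Q_pp[OF u u] .
      also have "\<dots> = B (br h y) (br h y)"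
        using br_anti[OF lie, of y h] by (simp add: bilinear_lneg[OF Bbil] bilinear_rneg[OF Bbil])
      finally show "(\<Sum>z\<in>FF 0. (Q (br y h) z)^2) = B (br h y) (br h y)" .
    qed
    finally show ?thesis .
  qed
  have "W 0 0 = (\<Sum>y\<in>FF 0. \<Sum>l\<in>N. alpha l * (\<Sum>h\<in>FF l. B (br h y) (br h y)))"
    unfolding W_def using inner by (rule sum.cong[OF refl])
  also have "\<dots> = (\<Sum>l\<in>N. alpha l * (\<Sum>h\<in>FF l. \<Sum>y\<in>FF 0. B (br h y) (br h y)))" by (rule swap_nest)
  also have "\<dots> = (\<Sum>l\<in>N. alpha l * (real (dim (K l)) * (1 - kappa l)))"
    by (intro sum.cong refl arg_cong2[where f="(*)"]) (simp add: sum_ad_p)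
  finally show ?thesis .
qed

end




context full begin

definition JJ :: "(nat \<times> 'a) set" where "JJ = Sigma I0 FF"
definition vv :: "nat \<times> 'a \<Rightarrow> 'a" where "vv j = (1 / sqrt (al (fst j))) *\<^sub>R snd j"

lemma JJ_fin: "finite JJ" unfolding JJ_def using FF_fin by (intro finite_SigmaI) auto

lemma sum_JJ: "(\<Sum>j\<in>JJ. h j) = (\<Sum>i\<in>I0. \<Sum>f\<in>FF i. h (i, f))"
proof -
  have "(\<Sum>i\<in>I0. \<Sum>f\<in>FF i. h (i, f)) = (\<Sum>j\<in>Sigma I0 FF. case_prod (\<lambda>i f. h (i, f)) j)"
    by (rule sum.Sigma) (auto simp: FF_fin)
  then show ?thesis unfolding JJ_def by simp
qed

lemma sq_al: "i \<in> I0 \<Longrightarrow> (1 / sqrt (al i)) * (1 / sqrt (al i)) = 1 / al i"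
  using al_pos[of i] by simp

lemma vv_eq: "vv (i, f) = (1 / sqrt (al i)) *\<^sub>R f" unfolding vv_def by simp

lemma cJ: "x = (\<Sum>j\<in>JJ. gm x (vv j) *\<^sub>R vv j)"
proof -
  have "(\<Sum>j\<in>JJ. gm x (vv j) *\<^sub>R vv j) = (\<Sum>i\<in>I0. \<Sum>f\<in>FF i. gm x (vv (i, f)) *\<^sub>R vv (i, f))"
    by (rule sum_JJ)
  also have "\<dots> = (\<Sum>i\<in>I0. \<Sum>f\<in>FF i. Q x f *\<^sub>R f)"
  proof (intro sum.cong refl)
    fix i f assume i: "i \<in> I0" and f: "f \<in> FF i"
    have "gm x (vv (i, f)) *\<^sub>R vv (i, f) = ((1 / sqrt (al i)) * (1 / sqrt (al i)) * al i * Q x f) *\<^sub>R f"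
      unfolding vv_eq by (simp add: bilinear_rmul[OF gm_bil] gm_FF[OF i f] algebra_simps)
    also have "\<dots> = Q x f *\<^sub>R f" using sq_al[OF i] al_pos[OF i] by simp
    finally show "gm x (vv (i, f)) *\<^sub>R vv (i, f) = Q x f *\<^sub>R f" .
  qed
  finally show ?thesis using Q_complete[of x] by simp
qed

lemma E_ex: "\<exists>E. orthonormal_basis_for gm E"
proof -
  obtain E where E: "onb gm UNIV E" "card E = dim (UNIV :: 'a set)"
    using onb_exists[OF gm_bil gm_sym _ subspace_UNIV] gm_pos by blast
  then show ?thesis unfolding orthonormal_basis_for_def onb_def by (intro exI[of _ E]) auto
qed

lemma E_props:
  assumes "orthonormal_basis_for gm E"
  shows "finite E" "orthn gm E" "\<And>x. x = (\<Sum>e\<in>E. gm x e *\<^sub>R e)"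
proof -
  show fin: "finite E" using assms unfolding orthonormal_basis_for_def by simp
  show o: "orthn gm E" using assms unfolding orthonormal_basis_for_def orthn_def by simp
  have ind: "independent E" by (rule orthn_independent[OF gm_bil o fin])
  have "dim (UNIV :: 'a set) \<le> card E" using assms unfolding orthonormal_basis_for_def by simp
  then have "UNIV \<subseteq> span E" using card_ge_dim_independent[OF subset_UNIV ind] by simp
  then show "\<And>x. x = (\<Sum>e\<in>E. gm x e *\<^sub>R e)" using orthn_span_coeff[OF gm_bil o fin] by blast
qed

lemma bil1: "bilinear (\<lambda>x y. gm (br a x) (br a y))"
  unfolding bilinear_def
  by (auto intro!: linearI simp: br_addr[OF lie] br_scaler[OF lie] bilinear_ladd[OF gm_bil]
      bilinear_radd[OF gm_bil] bilinear_lmul[OF gm_bil] bilinear_rmul[OF gm_bil])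

lemma bil2: "bilinear (\<lambda>x y. \<Sum>j\<in>JJ. gm (br x (vv j)) (br y (vv j)))"
  unfolding bilinear_def
  by (auto intro!: linearI simp: br_addl[OF lie] br_scalel[OF lie] bilinear_ladd[OF gm_bil]
      bilinear_radd[OF gm_bil] bilinear_lmul[OF gm_bil] bilinear_rmul[OF gm_bil] sum.distrib sum_distrib_left)

lemma YE: assumes E: "orthonormal_basis_for gm E"
  shows "(\<Sum>e\<in>E. B e e) = real (dim p) / beta + (\<Sum>i\<in>N. - real (dim (K i)) / alpha i)"
proof -
  have "(\<Sum>e\<in>E. B e e) = (\<Sum>j\<in>JJ. B (vv j) (vv j))"
    by (rule onb_transfer[OF E_props(1)[OF E] JJ_fin gm_sym E_props(3)[OF E] cJ Bbil])
  also have "\<dots> = (\<Sum>i\<in>I0. \<Sum>f\<in>FF i. B (vv (i, f)) (vv (i, f)))" by (rule sum_JJ)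
  also have "\<dots> = (\<Sum>i\<in>I0. (1 / al i) * (\<Sum>f\<in>FF i. B f f))"
  proof (intro sum.cong refl)
    fix i assume i: "i \<in> I0"
    have "B (vv (i, f)) (vv (i, f)) = (1 / al i) * B f f" for f
      unfolding vv_eq using sq_al[OF i]
      by (simp add: bilinear_lmul[OF Bbil] bilinear_rmul[OF Bbil] mult.assoc[symmetric])
    then show "(\<Sum>f\<in>FF i. B (vv (i, f)) (vv (i, f))) = (1 / al i) * (\<Sum>f\<in>FF i. B f f)"
      by (simp add: sum_distrib_left)
  qed
  also have "\<dots> = (1 / al 0) * (\<Sum>f\<in>FF 0. B f f) + (\<Sum>i\<in>N. (1 / al i) * (\<Sum>f\<in>FF i. B f f))"
    by (simp add: sum.atLeast_Suc_atMost)
  also have "(\<Sum>f\<in>FF 0. B f f) = real (dim p)" using B_unit_p card_FF0 by simp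
  also have "(\<Sum>i\<in>N. (1 / al i) * (\<Sum>f\<in>FF i. B f f)) = (\<Sum>i\<in>N. - real (dim (K i)) / alpha i)"
  proof (intro sum.cong refl)
    fix i assume i: "i \<in> N"
    have "(\<Sum>f\<in>FF i. B f f) = - real (card (FF i))" using B_unit_k[OF i] by simp
    then show "(1 / al i) * (\<Sum>f\<in>FF i. B f f) = - real (dim (K i)) / alpha i"
      using card_FF_N[OF i] i by (simp add: al_def)
  qed
  finally show ?thesis by (simp add: al_def)
qed

end




context full begin

definition TT :: "nat \<Rightarrow> nat \<Rightarrow> real" where "TT i' i = (1 / al i') * (1 / al i) * W i' i"

lemma PE: assumes E: "orthonormal_basis_for gm E"
  shows "(\<Sum>a\<in>E. \<Sum>b\<in>E. gm (br a b) (br a b)) = (\<Sum>i'\<in>I0. \<Sum>i\<in>I0. TT i' i)"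
proof -
  note fin = E_props(1)[OF E] and cE = E_props(3)[OF E]
  have "(\<Sum>a\<in>E. \<Sum>b\<in>E. gm (br a b) (br a b)) = (\<Sum>a\<in>E. \<Sum>j\<in>JJ. gm (br a (vv j)) (br a (vv j)))"
  proof (rule sum.cong[OF refl])
    fix a
    show "(\<Sum>b\<in>E. gm (br a b) (br a b)) = (\<Sum>j\<in>JJ. gm (br a (vv j)) (br a (vv j)))"
      by (rule onb_transfer[OF fin JJ_fin gm_sym cE cJ bil1])
  qed
  also have "\<dots> = (\<Sum>j'\<in>JJ. \<Sum>j\<in>JJ. gm (br (vv j') (vv j)) (br (vv j') (vv j)))"
    using onb_transfer[OF fin JJ_fin gm_sym cE cJ bil2] .
  also have "\<dots> = (\<Sum>i'\<in>I0. \<Sum>f'\<in>FF i'. \<Sum>i\<in>I0. \<Sum>f\<in>FF i.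
                  gm (br (vv (i', f')) (vv (i, f))) (br (vv (i', f')) (vv (i, f))))"
    by (simp add: sum_JJ)
  also have "\<dots> = (\<Sum>i'\<in>I0. \<Sum>f'\<in>FF i'. \<Sum>i\<in>I0. \<Sum>f\<in>FF i.
                  (1 / al i') * (1 / al i) * gm (br f' f) (br f' f))"
  proof (intro sum.cong refl)
    fix i' f' i f assume i': "i' \<in> I0" and i: "i \<in> I0"
    show "gm (br (vv (i', f')) (vv (i, f))) (br (vv (i', f')) (vv (i, f))) =
          (1 / al i') * (1 / al i) * gm (br f' f) (br f' f)"
      unfolding vv_eq using sq_al[OF i] sq_al[OF i']
      by (simp add: br_scalel[OF lie] br_scaler[OF lie] bilinear_lmul[OF gm_bil] bilinear_rmul[OF gm_bil]
          mult.assoc[symmetric]) (simp add: algebra_simps)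
  qed
  also have "\<dots> = (\<Sum>i'\<in>I0. \<Sum>i\<in>I0. \<Sum>f'\<in>FF i'. \<Sum>f\<in>FF i. (1 / al i') * (1 / al i) * gm (br f' f) (br f' f))"
    by (rule sum.cong[OF refl], rule sum.swap)
  also have "\<dots> = (\<Sum>i'\<in>I0. \<Sum>i\<in>I0. TT i' i)"
    unfolding TT_def W_def by (simp add: sum_distrib_left)
  finally show ?thesis .
qed

lemma TT_split: "(\<Sum>i'\<in>I0. \<Sum>i\<in>I0. TT i' i) =
   TT 0 0 + (\<Sum>i\<in>N. TT 0 i) + (\<Sum>i\<in>N. TT i 0 + TT i i)"
proof -
  have diag: "(\<Sum>i\<in>N. TT i' i) = TT i' i'" if i': "i' \<in> N" for i'
  proof -
    have "(\<Sum>i\<in>N. TT i' i) = TT i' i' + (\<Sum>i\<in>N - {i'}. TT i' i)"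
      by (rule sum.remove) (use i' in auto)
    also have "(\<Sum>i\<in>N - {i'}. TT i' i) = 0"
      by (rule sum.neutral, rule ballI) (use W_ij i' in \<open>auto simp: TT_def\<close>)
    finally show ?thesis by simp
  qed
  have "(\<Sum>i'\<in>I0. \<Sum>i\<in>I0. TT i' i) = (\<Sum>i\<in>I0. TT 0 i) + (\<Sum>i'\<in>N. \<Sum>i\<in>I0. TT i' i)"
    by (simp add: sum.atLeast_Suc_atMost)
  also have "(\<Sum>i\<in>I0. TT 0 i) = TT 0 0 + (\<Sum>i\<in>N. TT 0 i)"
    by (simp add: sum.atLeast_Suc_atMost)
  also have "(\<Sum>i'\<in>N. \<Sum>i\<in>I0. TT i' i) = (\<Sum>i'\<in>N. TT i' 0 + TT i' i')"
  proof (rule sum.cong[OF refl])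
    fix i' assume i': "i' \<in> N"
    have "(\<Sum>i\<in>I0. TT i' i) = TT i' 0 + (\<Sum>i\<in>N. TT i' i)" by (simp add: sum.atLeast_Suc_atMost)
    then show "(\<Sum>i\<in>I0. TT i' i) = TT i' 0 + TT i' i'" using diag[OF i'] by simp
  qed
  finally show ?thesis by simp
qed

lemma al_N: "i \<in> N \<Longrightarrow> al i = alpha i" unfolding al_def by auto
lemma al_0: "al 0 = beta" unfolding al_def by auto

lemma PE_val: "(\<Sum>i'\<in>I0. \<Sum>i\<in>I0. TT i' i) = (\<Sum>i\<in>N.
     alpha i * (real (dim (K i)) * (1 - kappa i)) / (beta * beta)
     + 2 * (real (dim (K i)) * (1 - kappa i)) / alpha i
     + real (dim (K i)) * kappa i / alpha i)"
proof -
  have t00: "TT 0 0 = (\<Sum>i\<in>N. alpha i * (real (dim (K i)) * (1 - kappa i)) / (beta * beta))"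
    unfolding TT_def W_00 al_0 by (simp add: sum_distrib_left sum_divide_distrib)
  have t0i: "TT 0 i = real (dim (K i)) * (1 - kappa i) / alpha i" if i: "i \<in> N" for i
    unfolding TT_def W_0i[OF i] al_0 al_N[OF i] using beta_pos by simp
  have ti0: "TT i 0 = real (dim (K i)) * (1 - kappa i) / alpha i" if i: "i \<in> N" for i
    unfolding TT_def W_i0[OF i] al_0 al_N[OF i] using beta_pos by simp
  have tii: "TT i i = real (dim (K i)) * kappa i / alpha i" if i: "i \<in> N" for i
    unfolding TT_def W_ii[OF i] al_N[OF i] using alpha_pos i by (simp add: field_simps)
  have "(\<Sum>i'\<in>I0. \<Sum>i\<in>I0. TT i' i) =
      (\<Sum>i\<in>N. alpha i * (real (dim (K i)) * (1 - kappa i)) / (beta * beta))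
      + (\<Sum>i\<in>N. real (dim (K i)) * (1 - kappa i) / alpha i)
      + (\<Sum>i\<in>N. real (dim (K i)) * (1 - kappa i) / alpha i + real (dim (K i)) * kappa i / alpha i)"
    unfolding TT_split t00 using t0i ti0 tii by simp
  also have "\<dots> = (\<Sum>i\<in>N.
     alpha i * (real (dim (K i)) * (1 - kappa i)) / (beta * beta)
     + 2 * (real (dim (K i)) * (1 - kappa i)) / alpha i
     + real (dim (K i)) * kappa i / alpha i)"
    by (simp add: sum.distrib[symmetric] algebra_simps)
  finally show ?thesis .
qed

theorem main:
  "scalar_curvature gm br =
     - (1/4) * (\<Sum>i=1..r+s. alpha i / beta^2 * real (dim (K i)) * (1 - kappa i))
     - real (dim p) / (2 * beta)
     + (1/4) * (\<Sum>i=1..r. real (dim (K i)) * kappa i / alpha i)"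
proof -
  define E where "E = (SOME E. orthonormal_basis_for gm E)"
  have E: "orthonormal_basis_for gm E" unfolding E_def using E_ex by (rule someI_ex)
  have S: "scalar_curvature gm br = (\<Sum>a\<in>E. \<Sum>b\<in>E. gm (curvature gm br E a b b) a)"
    unfolding scalar_curvature_def E_def Let_def ..
  also have "\<dots> = -1/4 * (\<Sum>a\<in>E. \<Sum>b\<in>E. gm (br a b) (br a b)) - 1/2 * (\<Sum>a\<in>E. B a a)"
    by (rule scal_formula[OF lie tr_ad_zero[OF lie simple] gm_bil gm_sym E_props[OF E]])
  also have "\<dots> = -1/4 * (\<Sum>i\<in>N.
     alpha i * (real (dim (K i)) * (1 - kappa i)) / (beta * beta)
     + 2 * (real (dim (K i)) * (1 - kappa i)) / alpha i
     + real (dim (K i)) * kappa i / alpha i)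
     - 1/2 * (real (dim p) / beta + (\<Sum>i\<in>N. - real (dim (K i)) / alpha i))"
    unfolding PE[OF E] PE_val YE[OF E] ..
  also have "\<dots> = - real (dim p) / (2 * beta) + (\<Sum>i\<in>N.
     - (1/4) * (alpha i / beta^2 * real (dim (K i)) * (1 - kappa i))
     + (1/4) * (real (dim (K i)) * kappa i / alpha i))"
  proof -
    have pt: "-1/4 * (alpha i * (real (dim (K i)) * (1 - kappa i)) / (beta * beta)
     + 2 * (real (dim (K i)) * (1 - kappa i)) / alpha i
     + real (dim (K i)) * kappa i / alpha i) - 1/2 * (- real (dim (K i)) / alpha i)
     = - (1/4) * (alpha i / beta^2 * real (dim (K i)) * (1 - kappa i))
     + (1/4) * (real (dim (K i)) * kappa i / alpha i)" if i: "i \<in> N" for i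
    proof -
      have "alpha i > 0" using alpha_pos i by blast
      then have ai: "alpha i \<noteq> 0" by simp
      have b: "beta \<noteq> 0" using beta_pos by simp
      show ?thesis using ai b by (simp add: field_simps power2_eq_square)
    qed
    have "-1/4 * (\<Sum>i\<in>N.
     alpha i * (real (dim (K i)) * (1 - kappa i)) / (beta * beta)
     + 2 * (real (dim (K i)) * (1 - kappa i)) / alpha i
     + real (dim (K i)) * kappa i / alpha i)
     - 1/2 * (\<Sum>i\<in>N. - real (dim (K i)) / alpha i)
     = (\<Sum>i\<in>N. -1/4 * (alpha i * (real (dim (K i)) * (1 - kappa i)) / (beta * beta)
     + 2 * (real (dim (K i)) * (1 - kappa i)) / alpha i
     + real (dim (K i)) * kappa i / alpha i) - 1/2 * (- real (dim (K i)) / alpha i))"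
      by (simp only: sum_distrib_left sum_subtractf)
    also have "\<dots> = (\<Sum>i\<in>N. - (1/4) * (alpha i / beta^2 * real (dim (K i)) * (1 - kappa i))
     + (1/4) * (real (dim (K i)) * kappa i / alpha i))"
      using pt by (rule sum.cong[OF refl])
    finally show ?thesis by (simp add: algebra_simps)
  qed
  also have "\<dots> = - (1/4) * (\<Sum>i=1..r+s. alpha i / beta^2 * real (dim (K i)) * (1 - kappa i))
     - real (dim p) / (2 * beta)
     + (1/4) * (\<Sum>i=1..r+s. real (dim (K i)) * kappa i / alpha i)"
  proof -
    have "(\<Sum>i\<in>N. - (1/4) * (alpha i / beta^2 * real (dim (K i)) * (1 - kappa i))
     + (1/4) * (real (dim (K i)) * kappa i / alpha i)) =
      - (1/4) * (\<Sum>i=1..r+s. alpha i / beta^2 * real (dim (K i)) * (1 - kappa i))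
     + (1/4) * (\<Sum>i=1..r+s. real (dim (K i)) * kappa i / alpha i)"
      by (simp only: sum.distrib sum_distrib_left)
    then show ?thesis by linarith
  qed
  also have "(\<Sum>i=1..r+s. real (dim (K i)) * kappa i / alpha i) = (\<Sum>i=1..r. real (dim (K i)) * kappa i / alpha i)"
  proof (cases "s = 0")
    case True then show ?thesis by simp
  next
    case False
    then have s1: "s = 1" using s01 by simp
    then show ?thesis using kappa_centre[OF s1] by simp
  qed
  finally show ?thesis .
qed

end



theorem corollary3p8:
  fixes br :: "'a::euclidean_space \<Rightarrow> 'a \<Rightarrow> 'a"
    and k :: "'a set" and K :: "nat \<Rightarrow> 'a set" and r s :: nat
    and kappa alpha :: "nat \<Rightarrow> real" and beta :: real
  assumes lie: "lie_bracket br"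
    and simple: "simple_sub br UNIV"
    and noncompact: "\<exists>x. killing br x x > 0"
    and cartan: "cartan_k br k"
    and simple_ideals: "\<forall>i\<in>{1..r}. ideal_of br (derived br k) (K i) \<and> simple_sub br (K i)"
    and all_simple_ideals: "\<forall>I. ideal_of br (derived br k) I \<and> simple_sub br I \<longrightarrow> (\<exists>i\<in>{1..r}. I = K i)"
    and distinct: "inj_on K {1..r}"
    and s_def: "s = (if centre br k = {0} then 0 else 1)"
    and centre_K: "s = 1 \<longrightarrow> K (r + 1) = centre br k"
    and kappa: "\<forall>i\<in>{1..r+s}. \<forall>x\<in>K i. \<forall>y\<in>K i. killing_on br (K i) x y = kappa i * killing br x y"
    and beta_pos: "beta > 0"
    and alpha_pos: "\<forall>i\<in>{1..r+s}. alpha i > 0"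
  shows "scalar_curvature
           (\<lambda>x y. beta * restr_form (Qform br k) (perp_k br k) x y
                 + (\<Sum>i=1..r+s. alpha i * restr_form (Qform br k) (K i) x y)) br
         = - (1/4) * (\<Sum>i=1..r+s. alpha i / beta^2 * real (dim (K i)) * (1 - kappa i))
           - real (dim (perp_k br k)) / (2 * beta)
           + (1/4) * (\<Sum>i=1..r. real (dim (K i)) * kappa i / alpha i)"
proof -
  interpret full br k K r s kappa alpha beta
    by (unfold_locales) (use lie cartan simple_ideals all_simple_ideals distinct s_def centre_K
        simple kappa beta_pos alpha_pos in auto)
  have "(\<lambda>x y. beta * restr_form (Qform br k) (perp_k br k) x y
                 + (\<Sum>i=1..r+s. alpha i * restr_form (Qform br k) (K i) x y)) = gm"
    by (intro ext) (simp add: gm_def)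
  then show ?thesis using main by simp
qed

end
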